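(* Let $\mathbb{F}$ be an algebraically closed field of characteristic zero and $J_2=E_{12}+E_{23}$. Let $\underline{A}=(J_2,A_2,A_3)$ and $\underline{B}=(J_2,B_2,B_3)$ be elements of $\mathcal{N}_3^3$ such that $f(\underline{A})=f(\underline{B})$ for all $f\in S_{3,3}$. Then $f(\underline{A})=f(\underline{B})$ for all $f\in P_{3,3}$.
   Context: $E_{ij}$ is the $3\times3$ matrix unit. $\mathcal{N}_3^3$ is the set of triples of nilpotent $3\times3$ matrices over $\mathbb{F}$. $\mathrm{tr}(Y_{i_1}\cdots Y_{i_r})$ denotes the function $\underline{A}\mapsto\mathrm{tr}(A_{i_1}\cdots A_{i_r})$. $S_{3,3}$ is the set consisting of: $\mathrm{tr}(Y_iY_j),\ \mathrm{tr}(Y_i^2Y_j),\ \mathrm{tr}(Y_iY_j^2),\ \mathrm{tr}(Y_i^2Y_j^2),\ \mathrm{tr}(Y_i^2Y_j^2Y_iY_j)$ for $1\le i<j\le3$; $\mathrm{tr}(Y_1Y_2Y_3)$, $\mathrm{tr}(Y_1Y_3Y_2)$; $\mathrm{tr}(Y_i^2Y_jY_k)$ for $\{i,j,k\}=\{1,2,3\}$; $\mathrm{tr}(Y_1^2Y_2Y_1Y_3)$, $\mathrm{tr}(Y_2^2Y_1Y_2Y_3)$, $\mathrm{tr}(Y_3^2Y_1Y_3Y_2)$. $P_{3,3}=S_{3,3}\sqcup P'_{3,3}$, where $P'_{3,3}$ consists of $\mathrm{tr}(Y_i^2Y_j^2Y_k)$ and $\mathrm{tr}(Y_i^2Y_j^2Y_iY_k)$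 for $\{i,j,k\}=\{1,2,3\}$, and $\mathrm{tr}(Y_1^2Y_2^2Y_3^2)$. *)

theory Defs
  imports "HOL-Analysis.Analysis" "HOL-Computational_Algebra.Polynomial"
begin

text \<open>3x3 matrices over a field are modelled as 'a^3^3 (HOL-Analysis).
  The paper's row/column indices 1,2,3 are mapped to the elements 0,1,2 of the
  numeral type 3 by idx3.\<close>

definition idx3 :: "nat \<Rightarrow> 3" where
  "idx3 k = of_nat (k - 1)"

definition matunit :: "nat \<Rightarrow> nat \<Rightarrow> 'a::semiring_1^3^3" where
  "matunit i j = (\<chi> r c. if r = idx3 i \<and> c = idx3 j then 1 else 0)"

primrec matpow :: "'a::semiring_1^'n^'n \<Rightarrow> nat \<Rightarrow> 'a^'n^'n" where
  "matpow A 0 = mat 1"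
| "matpow A (Suc k) = A ** matpow A k"

definition nilpotent_mat :: "'a::semiring_1^'n^'n \<Rightarrow> bool" where
  "nilpotent_mat A \<longleftrightarrow> (\<exists>k. matpow A k = 0)"

definition triple :: "'m \<Rightarrow> 'm \<Rightarrow> 'm \<Rightarrow> nat \<Rightarrow> 'm" where
  "triple X Y Z i = (if i = 1 then X else if i = 2 then Y else Z)"

text \<open>tr(Y_{i_1} ... Y_{i_r}) evaluated at a tuple: word given as list [i_1,...,i_r].\<close>
definition trword :: "(nat \<Rightarrow> 'a::semiring_1^'n^'n) \<Rightarrow> nat list \<Rightarrow> 'a" where
  "trword Y w = trace (foldr (\<lambda>i M. Y i ** M) w (mat 1))"

definition S33 :: "nat list set" where
  "S33 =
     {w. \<exists>i j. 1 \<le> i \<and> i < j \<and> j \<le> 3 \<and>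
          (w = [i,j] \<or> w = [i,i,j] \<or> w = [i,j,j] \<or> w = [i,i,j,j] \<or> w = [i,i,j,j,i,j])}
   \<union> {[1,2,3], [1,3,2]}
   \<union> {w. \<exists>i j k. {i,j,k} = {1,2,3::nat} \<and> w = [i,i,j,k]}
   \<union> {[1,1,2,1,3], [2,2,1,2,3], [3,3,1,3,2]}"

definition P33' :: "nat list set" where
  "P33' =
     {w. \<exists>i j k. {i,j,k} = {1,2,3::nat} \<and> (w = [i,i,j,j,k] \<or> w = [i,i,j,j,i,k])}
   \<union> {[1,1,2,2,3,3]}"

definition P33 :: "nat list set" where
  "P33 = S33 \<union> P33'"

end

theory Submission
  imports Defs
begin

definition M3 :: "'a \<Rightarrow> 'a \<Rightarrow> 'a \<Rightarrow> 'a \<Rightarrow> 'a \<Rightarrow> 'a \<Rightarrow> 'a \<Rightarrow> 'a \<Rightarrow> 'a \<Rightarrow> 'a^3^3" where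
  "M3 a b c d e f g h i = (\<chi> r s. if r = 0 then (if s = 0 then a else if s = 1 then b else c)
     else if r = 1 then (if s = 0 then d else if s = 1 then e else f)
     else (if s = 0 then g else if s = 1 then h else i))"

lemma UNIV3: "(UNIV::3 set) = {0,1,2}"
  unfolding UNIV_3 by auto

lemma sum3: "sum f (UNIV::3 set) = f 0 + f 1 + f 2"
  unfolding UNIV3 by (simp add: add.assoc)

lemma all3: "(\<forall>i::3. P i) \<longleftrightarrow> P 0 \<and> P 1 \<and> P 2"
  by (metis UNIV3 UNIV_I insertE singletonD)

lemma M3_entries: "(X::'a^3^3) = M3 (X$0$0) (X$0$1) (X$0$2) (X$1$0) (X$1$1) (X$1$2) (X$2$0) (X$2$1) (X$2$2)"
  unfolding M3_def vec_eq_iff all3 by simp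

lemma M3_eq: "M3 a1 a2 a3 a4 a5 a6 a7 a8 a9 = M3 b1 b2 b3 b4 b5 b6 b7 b8 b9 \<longleftrightarrow>
   a1 = b1 \<and> a2 = b2 \<and> a3 = b3 \<and> a4 = b4 \<and> a5 = b5 \<and> a6 = b6 \<and> a7 = b7 \<and> a8 = b8 \<and> a9 = b9"
  unfolding M3_def vec_eq_iff all3 by simp

lemma M3_mult: "M3 a1 a2 a3 a4 a5 a6 a7 a8 a9 ** M3 b1 b2 b3 b4 b5 b6 b7 b8 b9 =
  M3 (a1*b1+a2*b4+a3*b7) (a1*b2+a2*b5+a3*b8) (a1*b3+a2*b6+a3*b9)
     (a4*b1+a5*b4+a6*b7) (a4*b2+a5*b5+a6*b8) (a4*b3+a5*b6+a6*b9)
     (a7*b1+a8*b4+a9*b7) (a7*b2+a8*b5+a9*b8) (a7*b3+a8*b6+a9*b9)"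
  unfolding matrix_matrix_mult_def M3_def vec_eq_iff all3 by (simp add: sum3)

lemma M3_trace: "trace (M3 a1 a2 a3 a4 a5 a6 a7 a8 a9) = a1 + a5 + a9"
  unfolding trace_def M3_def by (simp add: sum3)

lemma M3_one: "(mat 1 :: 'a::semiring_1^3^3) = M3 1 0 0 0 1 0 0 0 1"
  unfolding mat_def M3_def vec_eq_iff all3 by simp

lemma J2_M3: "matunit 1 2 + matunit 2 3 = (M3 0 1 0 0 0 1 0 0 0 :: 'a::semiring_1^3^3)"
  unfolding matunit_def M3_def idx3_def vec_eq_iff all3 by simp

definition JJ :: "'a::semiring_1^3^3" where "JJ = M3 0 1 0 0 0 1 0 0 0"

lemma J2_JJ: "matunit 1 2 + matunit 2 3 = (JJ :: 'a::semiring_1^3^3)"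
  unfolding JJ_def by (rule J2_M3)

lemma det_M3: "det (M3 a b c d e f g h i :: 'a::comm_ring_1^3^3) =
   a*e*i + b*f*g + c*d*h - a*f*h - b*d*i - c*e*g"
  unfolding det_3 M3_def by (simp add: algebra_simps)

lemma M3_minus: "M3 a1 a2 a3 a4 a5 a6 a7 a8 a9 - M3 b1 b2 b3 b4 b5 b6 b7 b8 b9 =
   (M3 (a1-b1) (a2-b2) (a3-b3) (a4-b4) (a5-b5) (a6-b6) (a7-b7) (a8-b8) (a9-b9) :: 'a::ab_group_add^3^3)"
  unfolding M3_def vec_eq_iff all3 by simp

lemma mat_M3: "(mat x :: 'a::semiring_1^3^3) = M3 x 0 0 0 x 0 0 0 x"
  unfolding mat_def M3_def vec_eq_iff all3 by simp

subsection \<open>Nilpotent matrices\<close>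

lemma det_matpow: "det (matpow (A::'a::comm_ring_1^'n^'n) k) = det A ^ k"
  by (induct k) (simp_all add: det_mul det_I)

lemma nilp_det: assumes "nilpotent_mat (A::'a::field^'n^'n)" shows "det A = 0"
proof -
  obtain k where k: "matpow A k = 0" using assms unfolding nilpotent_mat_def by blast
  have k0: "k \<noteq> 0"
  proof
    assume "k = 0"
    then have "(mat 1 :: 'a^'n^'n) = 0" using k by simp
    then have "(mat 1 :: 'a^'n^'n) $ i $ i = 0 $ i $ i" for i by simp
    then show False by (simp add: mat_def)
  qed
  have d0: "det (0::'a^'n^'n) = 0"
    by (rule det_zero_row(2)[of undefined]) (simp add: row_def vec_eq_iff)
  have "det A ^ k = 0" using k det_matpow[of A k] d0 by simp
  then show ?thesis using k0 by simp
qed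

lemma nilp_eig:
  assumes "nilpotent_mat (A::'a::field^'n^'n)" and "det (mat l - A) = 0"
  shows "l = 0"
proof -
  obtain k where k: "matpow A k = 0" using assms unfolding nilpotent_mat_def by blast
  have "\<not> invertible (mat l - A)" using assms(2) invertible_det_nz by blast
  then have "\<not> (\<forall>x. (mat l - A) *v x = 0 \<longrightarrow> x = 0)"
    using invertible_left_inverse matrix_left_invertible_ker by blast
  then obtain v where v: "(mat l - A) *v v = 0" "v \<noteq> 0" by blast
  have ml: "mat l *v v = l *s v"
  proof -
    have "(\<Sum>j\<in>UNIV. (if i = j then l else 0) * v $ j) = l * v $ i" for i
    proof -
      have "(\<Sum>j\<in>UNIV. (if i = j then l else 0) * v $ j) = (\<Sum>j\<in>UNIV. if i = j then l * v $ j else 0)"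
        by (rule sum.cong) auto
      also have "\<dots> = l * v $ i" by simp
      finally show ?thesis .
    qed
    then show ?thesis by (simp add: vec_eq_iff matrix_vector_mult_def mat_def)
  qed
  have Av: "A *v v = l *s v"
    using v(1) ml by (simp add: matrix_vector_mult_diff_rdistrib)
  have pw: "matpow A n *v v = (l ^ n) *s v" for n
  proof (induct n)
    case 0 then show ?case by simp
  next
    case (Suc n)
    have "matpow A (Suc n) *v v = A *v (matpow A n *v v)" by (simp add: matrix_vector_mul_assoc)
    also have "\<dots> = (l ^ n) *s (A *v v)" using Suc by (simp add: vector_scalar_commute)
    also have "\<dots> = (l ^ Suc n) *s v" using Av by (simp add: vector_smult_assoc mult.commute)
    finally show ?case .
  qed
  have "(l ^ k) *s v = 0" using pw[of k] k by simp
  then have "l ^ k = 0" using v(2) by (metis vector_mul_eq_0)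
  then show ?thesis by simp
qed


definition nilp3 :: "'a::comm_ring_1^3^3 \<Rightarrow> bool" where
  "nilp3 X \<longleftrightarrow> trace X = 0 \<and> trace (X ** X) = 0 \<and> det X = 0"

lemma nilp3_M3: "nilp3 (M3 a11 a12 a13 a21 a22 a23 a31 a32 a33 :: 'a::comm_ring_1^3^3) \<longleftrightarrow>
   a11 + a22 + a33 = 0 \<and>
   a11*a11 + a22*a22 + a33*a33 + 2*(a12*a21 + a13*a31 + a23*a32) = 0 \<and>
   a11*a22*a33 + a12*a23*a31 + a13*a21*a32 - a11*a23*a32 - a12*a21*a33 - a13*a22*a31 = 0"
proof -
  have e1: "trace (M3 a11 a12 a13 a21 a22 a23 a31 a32 a33 :: 'a^3^3) = a11 + a22 + a33" by (simp add: M3_trace)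
  have e2: "trace (M3 a11 a12 a13 a21 a22 a23 a31 a32 a33 ** M3 a11 a12 a13 a21 a22 a23 a31 a32 a33 :: 'a^3^3)
     = a11*a11 + a22*a22 + a33*a33 + 2*(a12*a21 + a13*a31 + a23*a32)" by (simp add: M3_mult M3_trace algebra_simps)
  show ?thesis unfolding nilp3_def e1 e2 det_M3 by (rule refl)
qed

lemma quad_root: "\<exists>x::'a::alg_closed_field. x*x - t*x + s = 0"
proof -
  obtain x :: 'a where x: "(\<Sum>k\<le>2. (\<lambda>k. if k = 0 then s else if k = 1 then -t else 1) k * x ^ k) = 0"
    using alg_closed[of 2 "\<lambda>k. if k = 0 then s else if k = 1 then -t else 1"] by auto
  have "(\<Sum>k\<le>2. (\<lambda>k. if k = 0 then s else if k = 1 then -t else (1::'a)) k * x ^ k) = s - t*x + x*x"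
    by (simp add: numeral_2_eq_2 power2_eq_square)
  then have "s - t*x + x*x = 0" using x by simp
  then have "x*x - t*x + s = 0" by (simp add: algebra_simps)
  then show ?thesis by blast
qed

lemma nilpotent_nilp3:
  assumes "nilpotent_mat (A::'a::alg_closed_field^3^3)"
  shows "nilp3 A"
proof -
  obtain a11 a12 a13 a21 a22 a23 a31 a32 a33 where A: "A = M3 a11 a12 a13 a21 a22 a23 a31 a32 a33"
    using M3_entries by blast
  define t where "t = a11 + a22 + a33"
  define sc where "sc = a11*a22 - a12*a21 + a11*a33 - a13*a31 + a22*a33 - a23*a32"
  define d where "d = a11*a22*a33 + a12*a23*a31 + a13*a21*a32 - a11*a23*a32 - a12*a21*a33 - a13*a22*a31"
  have cp: "det (mat l - A) = l*l*l - t*l*l + sc * l - d" for l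
  proof -
    have "det (mat l - A) = (l - a11) * (l - a22) * (l - a33) + (0 - a12) * (0 - a23) * (0 - a31) +
      (0 - a13) * (0 - a21) * (0 - a32) - (l - a11) * (0 - a23) * (0 - a32) -
      (0 - a12) * (0 - a21) * (l - a33) - (0 - a13) * (l - a22) * (0 - a31)"
      unfolding A mat_M3 M3_minus det_M3 by (rule refl)
    also have "\<dots> = l*l*l - t*l*l + sc * l - d"
      unfolding t_def sc_def d_def by (simp add: algebra_simps)
    finally show ?thesis .
  qed
  have d0: "d = 0" using nilp_det[OF assms] unfolding A det_M3 d_def by simp
  have root: "l = 0" if "l*l*l - t*l*l + sc * l = 0" for l
  proof -
    have "det (mat l - A) = 0" using cp[of l] d0 that by simp
    then show ?thesis by (rule nilp_eig[OF assms])
  qed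
  obtain x where x: "x*x - t*x + sc = 0" using quad_root by blast
  have "x*x*x - t*x*x + sc * x = x * (x*x - t*x + sc)" by (simp add: algebra_simps)
  then have "x*x*x - t*x*x + sc * x = 0" using x by simp
  then have x0: "x = 0" by (rule root)
  then have sc0: "sc = 0" using x by simp
  have "t*t*t - t*t*t + sc * t = 0" using sc0 by simp
  then have t0: "t = 0" by (rule root)
  show ?thesis unfolding A nilp3_M3
  proof (intro conjI)
    show "a11 + a22 + a33 = 0" using t0 t_def by simp
    have "a11*a11 + a22*a22 + a33*a33 + 2*(a12*a21 + a13*a31 + a23*a32) = t*t - 2 * sc"
      unfolding t_def sc_def by (simp add: algebra_simps)
    then show "a11*a11 + a22*a22 + a33*a33 + 2*(a12*a21 + a13*a31 + a23*a32) = 0" using t0 sc0 by simp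
    show "a11*a22*a33 + a12*a23*a31 + a13*a21*a32 - a11*a23*a32 - a12*a21*a33 - a13*a22*a31 = 0"
      using d0 d_def by simp
  qed
qed


subsection \<open>Conjugation by the centralizer of J\<close>

definition UU :: "'a::comm_ring_1 \<Rightarrow> 'a \<Rightarrow> 'a^3^3" where "UU b c = M3 1 b c 0 1 b 0 0 1"
definition UI :: "'a::comm_ring_1 \<Rightarrow> 'a \<Rightarrow> 'a^3^3" where "UI b c = M3 1 (-b) (b*b-c) 0 1 (-b) 0 0 1"
definition cj :: "'a::comm_ring_1 \<Rightarrow> 'a \<Rightarrow> 'a^3^3 \<Rightarrow> 'a^3^3" where "cj b c X = (UU b c ** X) ** UI b c"

lemma UU_UI: "UU b c ** UI b c = mat 1"
  unfolding UU_def UI_def M3_mult M3_one M3_eq by (simp add: algebra_simps)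

lemma UI_UU: "UI b c ** UU b c = mat 1"
  unfolding UU_def UI_def M3_mult M3_one M3_eq by (simp add: algebra_simps)

lemma cj_JJ: "cj b c JJ = JJ"
  unfolding cj_def UU_def UI_def JJ_def M3_mult M3_eq by (simp add: algebra_simps)

lemma cj_mult: "cj b c X ** cj b c Y = cj b c (X ** Y)"
proof -
  have "cj b c X ** cj b c Y = (UU b c ** X) ** ((UI b c ** UU b c) ** (Y ** UI b c))"
    unfolding cj_def by (simp add: matrix_mul_assoc)
  also have "\<dots> = cj b c (X ** Y)" unfolding UI_UU cj_def by (simp add: matrix_mul_assoc)
  finally show ?thesis .
qed

lemma cj_one: "cj b c (mat 1) = mat 1"
  unfolding cj_def by (simp add: UU_UI)

lemma trace_cj: "trace (cj b c X) = trace X"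
proof -
  have "trace (cj b c X) = trace (UI b c ** (UU b c ** X))" unfolding cj_def by (rule trace_mul_sym)
  also have "\<dots> = trace X" by (simp add: matrix_mul_assoc UI_UU)
  finally show ?thesis .
qed

lemma det_cj: "det (cj b c X) = det X"
proof -
  have "det (UU b c) = 1" "det (UI b c) = 1" unfolding UU_def UI_def det_M3 by simp_all
  then show ?thesis unfolding cj_def by (simp add: det_mul)
qed

lemma nilp3_cj: "nilp3 X \<Longrightarrow> nilp3 (cj b c X)"
  unfolding nilp3_def by (simp add: trace_cj det_cj cj_mult)

lemma foldr_cj: "foldr (\<lambda>i M. cj b c (Y i) ** M) w (mat 1) = cj b c (foldr (\<lambda>i M. Y i ** M) w (mat 1))"
  by (induct w) (simp_all add: cj_one cj_mult)

lemma triple_cj: "triple JJ (cj b c A) (cj b c C) = (\<lambda>i. cj b c (triple JJ A C i))"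
  unfolding triple_def by (auto simp: cj_JJ)

lemma trword_cj: "trword (triple JJ (cj b c A) (cj b c C)) w = trword (triple JJ A C) w"
  unfolding trword_def triple_cj foldr_cj trace_cj by (rule refl)

lemma cj_M3: "cj b c (M3 a11 a12 a13 a21 a22 a23 a31 a32 a33) = M3 (a11 + a21*b + a31*c) (- a11*b + a12 - a21*b*b + a22*b - a31*b*c + a32*c) (a11*b*b - a11*c - a12*b + a13 - a21*b*c + a21*b*b*b - a22*b*b + a23*b + a31*b*b*c - a31*c*c - a32*b*c + a33*c) (a21 + a31*b) (- a21*b + a22 - a31*b*b + a32*b) (a21*b*b - a21*c - a22*b + a23 - a31*b*c + a31*b*b*b - a32*b*b + a33*b) (a31) (- a31*b + a32) (a31*b*b - a31*c - a32*b + a33)"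
  unfolding cj_def UU_def UI_def M3_mult M3_eq by (simp add: algebra_simps)


lemma S33_pair0: assumes "1 \<le> i" "i < j" "j \<le> 3" shows "[i,j] \<in> S33"
  unfolding S33_def by (rule UnI1, rule UnI1, rule UnI1, rule CollectI, rule exI[of _ i], rule exI[of _ j]) (use assms in auto)

lemma S33_pair1: assumes "1 \<le> i" "i < j" "j \<le> 3" shows "[i,i,j] \<in> S33"
  unfolding S33_def by (rule UnI1, rule UnI1, rule UnI1, rule CollectI, rule exI[of _ i], rule exI[of _ j]) (use assms in auto)

lemma S33_pair2: assumes "1 \<le> i" "i < j" "j \<le> 3" shows "[i,j,j] \<in> S33"
  unfolding S33_def by (rule UnI1, rule UnI1, rule UnI1, rule CollectI, rule exI[of _ i], rule exI[of _ j]) (use assms in auto)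

lemma S33_pair3: assumes "1 \<le> i" "i < j" "j \<le> 3" shows "[i,i,j,j] \<in> S33"
  unfolding S33_def by (rule UnI1, rule UnI1, rule UnI1, rule CollectI, rule exI[of _ i], rule exI[of _ j]) (use assms in auto)

lemma S33_pair4: assumes "1 \<le> i" "i < j" "j \<le> 3" shows "[i,i,j,j,i,j] \<in> S33"
  unfolding S33_def by (rule UnI1, rule UnI1, rule UnI1, rule CollectI, rule exI[of _ i], rule exI[of _ j]) (use assms in auto)

lemmas S33_pair = S33_pair0 S33_pair1 S33_pair2 S33_pair3 S33_pair4

lemma S33_3: assumes "{i,j,k} = {1,2,3::nat}" shows "[i,i,j,k] \<in> S33"
  unfolding S33_def by (rule UnI1, rule UnI2, rule CollectI, rule exI[of _ i], rule exI[of _ j], rule exI[of _ k]) (use assms in auto)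

lemma m_w12: "[1,2] \<in> S33" using S33_pair0[of 1 2] by simp
lemma m_w112: "[1,1,2] \<in> S33" using S33_pair1[of 1 2] by simp
lemma m_w122: "[1,2,2] \<in> S33" using S33_pair2[of 1 2] by simp
lemma m_w1122: "[1,1,2,2] \<in> S33" using S33_pair3[of 1 2] by simp
lemma m_w112212: "[1,1,2,2,1,2] \<in> S33" using S33_pair4[of 1 2] by simp
lemma m_w13: "[1,3] \<in> S33" using S33_pair0[of 1 3] by simp
lemma m_w113: "[1,1,3] \<in> S33" using S33_pair1[of 1 3] by simp
lemma m_w133: "[1,3,3] \<in> S33" using S33_pair2[of 1 3] by simp
lemma m_w1133: "[1,1,3,3] \<in> S33" using S33_pair3[of 1 3] by simp
lemma m_w113313: "[1,1,3,3,1,3] \<in> S33" using S33_pair4[of 1 3] by simp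
lemma m_w23: "[2,3] \<in> S33" using S33_pair0[of 2 3] by simp
lemma m_w223: "[2,2,3] \<in> S33" using S33_pair1[of 2 3] by simp
lemma m_w233: "[2,3,3] \<in> S33" using S33_pair2[of 2 3] by simp
lemma m_w2233: "[2,2,3,3] \<in> S33" using S33_pair3[of 2 3] by simp
lemma m_w223323: "[2,2,3,3,2,3] \<in> S33" using S33_pair4[of 2 3] by simp
lemma m_w1123: "[1,1,2,3] \<in> S33" using S33_3[of 1 2 3] by (simp add: insert_commute)
lemma m_w1132: "[1,1,3,2] \<in> S33" using S33_3[of 1 3 2] by (simp add: insert_commute)
lemma m_w2213: "[2,2,1,3] \<in> S33" using S33_3[of 2 1 3] by (simp add: insert_commute)
lemma m_w2231: "[2,2,3,1] \<in> S33" using S33_3[of 2 3 1] by (simp add: insert_commute)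
lemma m_w3312: "[3,3,1,2] \<in> S33" using S33_3[of 3 1 2] by (simp add: insert_commute)
lemma m_w3321: "[3,3,2,1] \<in> S33" using S33_3[of 3 2 1] by (simp add: insert_commute)
lemma m_w123: "[1,2,3] \<in> S33" by (simp add: S33_def)
lemma m_w132: "[1,3,2] \<in> S33" by (simp add: S33_def)
lemma m_w11213: "[1,1,2,1,3] \<in> S33" by (simp add: S33_def)
lemma m_w22123: "[2,2,1,2,3] \<in> S33" by (simp add: S33_def)
lemma m_w33132: "[3,3,1,3,2] \<in> S33" by (simp add: S33_def)

lemma tw_w12: "trword (triple (JJ::'a::comm_ring_1^3^3) (M3 a11 a12 a13 a21 a22 a23 a31 a32 a33) (M3 c11 c12 c13 c21 c22 c23 c31 c32 c33)) [1,2] = a21 + a32"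
  by (simp add: trword_def triple_def M3_mult M3_one M3_trace JJ_def; simp add: algebra_simps)

lemma tw_w112: "trword (triple (JJ::'a::comm_ring_1^3^3) (M3 a11 a12 a13 a21 a22 a23 a31 a32 a33) (M3 c11 c12 c13 c21 c22 c23 c31 c32 c33)) [1,1,2] = a31"
  by (simp add: trword_def triple_def M3_mult M3_one M3_trace JJ_def; simp add: algebra_simps)

lemma tw_w122: "trword (triple (JJ::'a::comm_ring_1^3^3) (M3 a11 a12 a13 a21 a22 a23 a31 a32 a33) (M3 c11 c12 c13 c21 c22 c23 c31 c32 c33)) [1,2,2] = a11*a21 + a12*a31 + a21*a22 + a22*a32 + a23*a31 + a32*a33"
  by (simp add: trword_def triple_def M3_mult M3_one M3_trace JJ_def; simp add: algebra_simps)

lemma tw_w1122: "trword (triple (JJ::'a::comm_ring_1^3^3) (M3 a11 a12 a13 a21 a22 a23 a31 a32 a33) (M3 c11 c12 c13 c21 c22 c23 c31 c32 c33)) [1,1,2,2] = a11*a31 + a21*a32 + a31*a33"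
  by (simp add: trword_def triple_def M3_mult M3_one M3_trace JJ_def; simp add: algebra_simps)

lemma tw_w112212: "trword (triple (JJ::'a::comm_ring_1^3^3) (M3 a11 a12 a13 a21 a22 a23 a31 a32 a33) (M3 c11 c12 c13 c21 c22 c23 c31 c32 c33)) [1,1,2,2,1,2] = a11*a21*a31 + a12*a31*a31 + a21*a31*a33 + a21*a21*a32 + a22*a31*a32 + a31*a32*a33"
  by (simp add: trword_def triple_def M3_mult M3_one M3_trace JJ_def; simp add: algebra_simps)

lemma tw_w13: "trword (triple (JJ::'a::comm_ring_1^3^3) (M3 a11 a12 a13 a21 a22 a23 a31 a32 a33) (M3 c11 c12 c13 c21 c22 c23 c31 c32 c33)) [1,3] = c21 + c32"
  by (simp add: trword_def triple_def M3_mult M3_one M3_trace JJ_def; simp add: algebra_simps)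

lemma tw_w113: "trword (triple (JJ::'a::comm_ring_1^3^3) (M3 a11 a12 a13 a21 a22 a23 a31 a32 a33) (M3 c11 c12 c13 c21 c22 c23 c31 c32 c33)) [1,1,3] = c31"
  by (simp add: trword_def triple_def M3_mult M3_one M3_trace JJ_def; simp add: algebra_simps)

lemma tw_w133: "trword (triple (JJ::'a::comm_ring_1^3^3) (M3 a11 a12 a13 a21 a22 a23 a31 a32 a33) (M3 c11 c12 c13 c21 c22 c23 c31 c32 c33)) [1,3,3] = c11*c21 + c12*c31 + c21*c22 + c22*c32 + c23*c31 + c32*c33"
  by (simp add: trword_def triple_def M3_mult M3_one M3_trace JJ_def; simp add: algebra_simps)

lemma tw_w1133: "trword (triple (JJ::'a::comm_ring_1^3^3) (M3 a11 a12 a13 a21 a22 a23 a31 a32 a33) (M3 c11 c12 c13 c21 c22 c23 c31 c32 c33)) [1,1,3,3] = c11*c31 + c21*c32 + c31*c33"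
  by (simp add: trword_def triple_def M3_mult M3_one M3_trace JJ_def; simp add: algebra_simps)

lemma tw_w113313: "trword (triple (JJ::'a::comm_ring_1^3^3) (M3 a11 a12 a13 a21 a22 a23 a31 a32 a33) (M3 c11 c12 c13 c21 c22 c23 c31 c32 c33)) [1,1,3,3,1,3] = c11*c21*c31 + c12*c31*c31 + c21*c31*c33 + c21*c21*c32 + c22*c31*c32 + c31*c32*c33"
  by (simp add: trword_def triple_def M3_mult M3_one M3_trace JJ_def; simp add: algebra_simps)

lemma tw_w23: "trword (triple (JJ::'a::comm_ring_1^3^3) (M3 a11 a12 a13 a21 a22 a23 a31 a32 a33) (M3 c11 c12 c13 c21 c22 c23 c31 c32 c33)) [2,3] = a11*c11 + a12*c21 + a13*c31 + a21*c12 + a22*c22 + a23*c32 + a31*c13 + a32*c23 + a33*c33"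
  by (simp add: trword_def triple_def M3_mult M3_one M3_trace JJ_def; simp add: algebra_simps)

lemma tw_w223: "trword (triple (JJ::'a::comm_ring_1^3^3) (M3 a11 a12 a13 a21 a22 a23 a31 a32 a33) (M3 c11 c12 c13 c21 c22 c23 c31 c32 c33)) [2,2,3] = a11*a12*c21 + a11*a13*c31 + a11*a21*c12 + a11*a31*c13 + a11*a11*c11 + a12*a21*c11 + a12*a21*c22 + a12*a22*c21 + a12*a23*c31 + a12*a31*c23 + a13*a21*c32 + a13*a31*c11 + a13*a31*c33 + a13*a32*c21 + a13*a33*c31 + a21*a22*c12 + a21*a32*c13 + a22*a23*c32 + a22*a32*c23 + a22*a22*c22 + a23*a31*c12 + a23*a32*c22 + a23*a32*c33 + a23*a33*c32 + a31*a33*c13 + a32*a33*c23 + a33*a33*c33"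
  by (simp add: trword_def triple_def M3_mult M3_one M3_trace JJ_def; simp add: algebra_simps)

lemma tw_w233: "trword (triple (JJ::'a::comm_ring_1^3^3) (M3 a11 a12 a13 a21 a22 a23 a31 a32 a33) (M3 c11 c12 c13 c21 c22 c23 c31 c32 c33)) [2,3,3] = a11*c11*c11 + a11*c12*c21 + a11*c13*c31 + a12*c11*c21 + a12*c21*c22 + a12*c23*c31 + a13*c11*c31 + a13*c21*c32 + a13*c31*c33 + a21*c11*c12 + a21*c12*c22 + a21*c13*c32 + a22*c12*c21 + a22*c22*c22 + a22*c23*c32 + a23*c12*c31 + a23*c22*c32 + a23*c32*c33 + a31*c11*c13 + a31*c12*c23 + a31*c13*c33 + a32*c13*c21 + a32*c22*c23 + a32*c23*c33 + a33*c13*c31 + a33*c23*c32 + a33*c33*c33"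
  by (simp add: trword_def triple_def M3_mult M3_one M3_trace JJ_def; simp add: algebra_simps)

lemma tw_w2233: "trword (triple (JJ::'a::comm_ring_1^3^3) (M3 a11 a12 a13 a21 a22 a23 a31 a32 a33) (M3 c11 c12 c13 c21 c22 c23 c31 c32 c33)) [2,2,3,3] = a11*a12*c11*c21 + a11*a12*c21*c22 + a11*a12*c23*c31 + a11*a13*c11*c31 + a11*a13*c21*c32 + a11*a13*c31*c33 + a11*a21*c11*c12 + a11*a21*c12*c22 + a11*a21*c13*c32 + a11*a31*c11*c13 + a11*a31*c12*c23 + a11*a31*c13*c33 + a11*a11*c11*c11 + a11*a11*c12*c21 + a11*a11*c13*c31 + a12*a21*c11*c11 + 2*a12*a21*c12*c21 + a12*a21*c13*c31 + a12*a21*c22*c22 + a12*a21*c23*c32 + a12*a22*c11*c21 + a12*a22*c21*c22 + a12*a22*c23*c31 + a12*a23*c11*c31 + a12*a23*c21*c32 + a12*a23*c31*c33 + a12*a31*c13*c21 + a12*a31*c22*c23 + a12*a31*c23*c33 + a13*a21*c12*c31 + a13*a21*c22*c32 + a13*a21*c32*c33 + a13*a31*c11*c11 + a13*a31*c12*c21 + 2*a13*a31*c13*c31 + a13*a31*c23*c32 + a13*a31*c33*c33 + a13*a32*c11*c21 + a13*a32*c21*c22 + a13*a32*c23*c31 + a13*a33*c11*c31 + a13*a33*c21*c32 + a13*a33*c31*c33 + a21*a22*c11*c12 + a21*a22*c12*c22 + a21*a22*c13*c32 + a21*a32*c11*c13 + a21*a32*c12*c23 + a21*a32*c13*c33 +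 a22*a23*c12*c31 + a22*a23*c22*c32 + a22*a23*c32*c33 + a22*a32*c13*c21 + a22*a32*c22*c23 + a22*a32*c23*c33 + a22*a22*c12*c21 + a22*a22*c22*c22 + a22*a22*c23*c32 + a23*a31*c11*c12 + a23*a31*c12*c22 + a23*a31*c13*c32 + a23*a32*c12*c21 + a23*a32*c13*c31 + a23*a32*c22*c22 + 2*a23*a32*c23*c32 + a23*a32*c33*c33 + a23*a33*c12*c31 + a23*a33*c22*c32 + a23*a33*c32*c33 + a31*a33*c11*c13 + a31*a33*c12*c23 + a31*a33*c13*c33 + a32*a33*c13*c21 + a32*a33*c22*c23 + a32*a33*c23*c33 + a33*a33*c13*c31 + a33*a33*c23*c32 + a33*a33*c33*c33"
  by (simp add: trword_def triple_def M3_mult M3_one M3_trace JJ_def; simp add: algebra_simps)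

lemma tw_w123: "trword (triple (JJ::'a::comm_ring_1^3^3) (M3 a11 a12 a13 a21 a22 a23 a31 a32 a33) (M3 c11 c12 c13 c21 c22 c23 c31 c32 c33)) [1,2,3] = a21*c11 + a22*c21 + a23*c31 + a31*c12 + a32*c22 + a33*c32"
  by (simp add: trword_def triple_def M3_mult M3_one M3_trace JJ_def; simp add: algebra_simps)

lemma tw_w132: "trword (triple (JJ::'a::comm_ring_1^3^3) (M3 a11 a12 a13 a21 a22 a23 a31 a32 a33) (M3 c11 c12 c13 c21 c22 c23 c31 c32 c33)) [1,3,2] = a11*c21 + a12*c31 + a21*c22 + a22*c32 + a31*c23 + a32*c33"
  by (simp add: trword_def triple_def M3_mult M3_one M3_trace JJ_def; simp add: algebra_simps)

lemma tw_w1123: "trword (triple (JJ::'a::comm_ring_1^3^3) (M3 a11 a12 a13 a21 a22 a23 a31 a32 a33) (M3 c11 c12 c13 c21 c22 c23 c31 c32 c33)) [1,1,2,3] = a31*c11 + a32*c21 + a33*c31"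
  by (simp add: trword_def triple_def M3_mult M3_one M3_trace JJ_def; simp add: algebra_simps)

lemma tw_w1132: "trword (triple (JJ::'a::comm_ring_1^3^3) (M3 a11 a12 a13 a21 a22 a23 a31 a32 a33) (M3 c11 c12 c13 c21 c22 c23 c31 c32 c33)) [1,1,3,2] = a11*c31 + a21*c32 + a31*c33"
  by (simp add: trword_def triple_def M3_mult M3_one M3_trace JJ_def; simp add: algebra_simps)

lemma tw_w2213: "trword (triple (JJ::'a::comm_ring_1^3^3) (M3 a11 a12 a13 a21 a22 a23 a31 a32 a33) (M3 c11 c12 c13 c21 c22 c23 c31 c32 c33)) [2,2,1,3] = a11*a12*c31 + a11*a21*c22 + a11*a31*c23 + a11*a11*c21 + a12*a21*c21 + a12*a21*c32 + a12*a22*c31 + a12*a31*c33 + a13*a31*c21 + a13*a32*c31 + a21*a22*c22 + a21*a32*c23 + a22*a32*c33 + a22*a22*c32 + a23*a31*c22 + a23*a32*c32 + a31*a33*c23 + a32*a33*c33"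
  by (simp add: trword_def triple_def M3_mult M3_one M3_trace JJ_def; simp add: algebra_simps)

lemma tw_w2231: "trword (triple (JJ::'a::comm_ring_1^3^3) (M3 a11 a12 a13 a21 a22 a23 a31 a32 a33) (M3 c11 c12 c13 c21 c22 c23 c31 c32 c33)) [2,2,3,1] = a11*a21*c11 + a11*a31*c12 + a12*a21*c21 + a12*a31*c22 + a13*a21*c31 + a13*a31*c32 + a21*a22*c11 + a21*a32*c12 + a22*a23*c31 + a22*a32*c22 + a22*a22*c21 + a23*a31*c11 + a23*a32*c21 + a23*a32*c32 + a23*a33*c31 + a31*a33*c12 + a32*a33*c22 + a33*a33*c32"
  by (simp add: trword_def triple_def M3_mult M3_one M3_trace JJ_def; simp add: algebra_simps)

lemma tw_w3312: "trword (triple (JJ::'a::comm_ring_1^3^3) (M3 a11 a12 a13 a21 a22 a23 a31 a32 a33) (M3 c11 c12 c13 c21 c22 c23 c31 c32 c33)) [3,3,1,2] = a21*c11*c11 + a21*c12*c21 + a21*c13*c31 + a22*c11*c21 + a22*c21*c22 + a22*c23*c31 + a23*c11*c31 + a23*c21*c32 + a23*c31*c33 + a31*c11*c12 + a31*c12*c22 + a31*c13*c32 + a32*c12*c21 + a32*c22*c22 + a32*c23*c32 + a33*c12*c31 + a33*c22*c32 + a33*c32*c33"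
  by (simp add: trword_def triple_def M3_mult M3_one M3_trace JJ_def; simp add: algebra_simps)

lemma tw_w3321: "trword (triple (JJ::'a::comm_ring_1^3^3) (M3 a11 a12 a13 a21 a22 a23 a31 a32 a33) (M3 c11 c12 c13 c21 c22 c23 c31 c32 c33)) [3,3,2,1] = a11*c11*c21 + a11*c21*c22 + a11*c23*c31 + a12*c11*c31 + a12*c21*c32 + a12*c31*c33 + a21*c12*c21 + a21*c22*c22 + a21*c23*c32 + a22*c12*c31 + a22*c22*c32 + a22*c32*c33 + a31*c13*c21 + a31*c22*c23 + a31*c23*c33 + a32*c13*c31 + a32*c23*c32 + a32*c33*c33"
  by (simp add: trword_def triple_def M3_mult M3_one M3_trace JJ_def; simp add: algebra_simps)

lemma tw_w11213: "trword (triple (JJ::'a::comm_ring_1^3^3) (M3 a11 a12 a13 a21 a22 a23 a31 a32 a33) (M3 c11 c12 c13 c21 c22 c23 c31 c32 c33)) [1,1,2,1,3] = a31*c21 + a32*c31"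
  by (simp add: trword_def triple_def M3_mult M3_one M3_trace JJ_def; simp add: algebra_simps)

lemma tw_w22123: "trword (triple (JJ::'a::comm_ring_1^3^3) (M3 a11 a12 a13 a21 a22 a23 a31 a32 a33) (M3 c11 c12 c13 c21 c22 c23 c31 c32 c33)) [2,2,1,2,3] = a11*a12*a31*c11 + a11*a12*a32*c21 + a11*a12*a33*c31 + a11*a21*a22*c22 + a11*a21*a23*c32 + a11*a21*a31*c13 + a11*a21*a21*c12 + a11*a22*a31*c23 + a11*a23*a31*c33 + a11*a11*a21*c11 + a11*a11*a22*c21 + a11*a11*a23*c31 + a12*a21*a22*c21 + a12*a21*a23*c31 + a12*a21*a31*c12 + a12*a21*a32*c22 + a12*a21*a33*c32 + a12*a21*a21*c11 + a12*a22*a31*c11 + a12*a22*a32*c21 + a12*a22*a33*c31 + a12*a31*a32*c23 + a12*a31*a33*c33 + a12*a31*a31*c13 + a13*a21*a31*c11 + a13*a22*a31*c21 + a13*a23*a31*c31 + a13*a31*a32*c11 + a13*a32*a33*c31 + a13*a32*a32*c21 + a21*a22*a23*c32 + a21*a22*a32*c23 + a21*a22*a22*c22 + a21*a23*a31*c12 + a21*a23*a32*c33 + a21*a31*a33*c13 + a21*a21*a22*c12 + a21*a21*a32*c13 + a22*a23*a31*c22 + a22*a31*a32*c13 + a22*a31*a33*c23 + a22*a32*a33*c33 + a22*a32*a32*c23 + a22*a22*a31*c12 + a22*a22*a32*c22 + a22*a22*a33*c32 + a23*a31*a32*c12 + a23*a31*a33*c33 + a23*a32*a33*c32 + a23*a32*a32*c22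 + a23*a23*a31*c32 + a31*a32*a33*c13 + a32*a33*a33*c33 + a32*a32*a33*c23"
  by (simp add: trword_def triple_def M3_mult M3_one M3_trace JJ_def; simp add: algebra_simps)

lemma tw_w33132: "trword (triple (JJ::'a::comm_ring_1^3^3) (M3 a11 a12 a13 a21 a22 a23 a31 a32 a33) (M3 c11 c12 c13 c21 c22 c23 c31 c32 c33)) [3,3,1,3,2] = a11*c11*c12*c31 + a11*c11*c11*c21 + a11*c12*c21*c21 + a11*c12*c22*c31 + a11*c13*c21*c31 + a11*c13*c31*c32 + a12*c11*c21*c21 + a12*c12*c21*c31 + a12*c21*c23*c31 + a12*c21*c21*c22 + a12*c22*c22*c31 + a12*c23*c31*c32 + a13*c11*c21*c31 + a13*c12*c31*c31 + a13*c21*c31*c33 + a13*c21*c21*c32 + a13*c22*c31*c32 + a13*c31*c32*c33 + a21*c11*c12*c32 + a21*c11*c11*c22 + a21*c12*c21*c22 + a21*c12*c22*c32 + a21*c13*c22*c31 + a21*c13*c32*c32 + a22*c11*c21*c22 + a22*c12*c21*c32 + a22*c21*c22*c22 + a22*c22*c23*c31 + a22*c22*c22*c32 + a22*c23*c32*c32 + a23*c11*c22*c31 + a23*c12*c31*c32 + a23*c21*c22*c32 + a23*c22*c31*c33 + a23*c22*c32*c32 + a23*c32*c32*c33 + a31*c11*c12*c33 + a31*c11*c11*c23 + a31*c12*c21*c23 + a31*c12*c22*c33 + a31*c13*c23*c31 + a31*c13*c32*c33 + a32*c11*c21*c23 + a32*c12*c21*c33 + a32*c21*c22*c23 + a32*c22*c22*c33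 + a32*c23*c32*c33 + a32*c23*c23*c31 + a33*c11*c23*c31 + a33*c12*c31*c33 + a33*c21*c23*c32 + a33*c22*c32*c33 + a33*c23*c31*c33 + a33*c32*c33*c33"
  by (simp add: trword_def triple_def M3_mult M3_one M3_trace JJ_def; simp add: algebra_simps)

lemma tw_w11223: "trword (triple (JJ::'a::comm_ring_1^3^3) (M3 a11 a12 a13 a21 a22 a23 a31 a32 a33) (M3 c11 c12 c13 c21 c22 c23 c31 c32 c33)) [1,1,2,2,3] = a11*a31*c11 + a12*a31*c21 + a13*a31*c31 + a21*a32*c11 + a22*a32*c21 + a23*a32*c31 + a31*a33*c11 + a32*a33*c21 + a33*a33*c31"
  by (simp add: trword_def triple_def M3_mult M3_one M3_trace JJ_def; simp add: algebra_simps)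

lemma tw_w11332: "trword (triple (JJ::'a::comm_ring_1^3^3) (M3 a11 a12 a13 a21 a22 a23 a31 a32 a33) (M3 c11 c12 c13 c21 c22 c23 c31 c32 c33)) [1,1,3,3,2] = a11*c11*c31 + a11*c21*c32 + a11*c31*c33 + a21*c12*c31 + a21*c22*c32 + a21*c32*c33 + a31*c13*c31 + a31*c23*c32 + a31*c33*c33"
  by (simp add: trword_def triple_def M3_mult M3_one M3_trace JJ_def; simp add: algebra_simps)

lemma tw_w22113: "trword (triple (JJ::'a::comm_ring_1^3^3) (M3 a11 a12 a13 a21 a22 a23 a31 a32 a33) (M3 c11 c12 c13 c21 c22 c23 c31 c32 c33)) [2,2,1,1,3] = a11*a21*c32 + a11*a31*c33 + a11*a11*c31 + a12*a21*c31 + a13*a31*c31 + a21*a22*c32 + a21*a32*c33 + a23*a31*c32 + a31*a33*c33"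
  by (simp add: trword_def triple_def M3_mult M3_one M3_trace JJ_def; simp add: algebra_simps)

lemma tw_w22331: "trword (triple (JJ::'a::comm_ring_1^3^3) (M3 a11 a12 a13 a21 a22 a23 a31 a32 a33) (M3 c11 c12 c13 c21 c22 c23 c31 c32 c33)) [2,2,3,3,1] = a11*a21*c11*c11 + a11*a21*c12*c21 + a11*a21*c13*c31 + a11*a31*c11*c12 + a11*a31*c12*c22 + a11*a31*c13*c32 + a12*a21*c11*c21 + a12*a21*c21*c22 + a12*a21*c23*c31 + a12*a31*c12*c21 + a12*a31*c22*c22 + a12*a31*c23*c32 + a13*a21*c11*c31 + a13*a21*c21*c32 + a13*a21*c31*c33 + a13*a31*c12*c31 + a13*a31*c22*c32 + a13*a31*c32*c33 + a21*a22*c11*c11 + a21*a22*c12*c21 + a21*a22*c13*c31 + a21*a32*c11*c12 + a21*a32*c12*c22 + a21*a32*c13*c32 + a22*a23*c11*c31 + a22*a23*c21*c32 + a22*a23*c31*c33 + a22*a32*c12*c21 + a22*a32*c22*c22 + a22*a32*c23*c32 + a22*a22*c11*c21 + a22*a22*c21*c22 + a22*a22*c23*c31 + a23*a31*c11*c11 + a23*a31*c12*c21 + a23*a31*c13*c31 + a23*a32*c11*c21 + a23*a32*c12*c31 + a23*a32*c21*c22 + a23*a32*c22*c32 + a23*a32*c23*c31 + a23*a32*c32*c33 + a23*a33*c11*c31 + a23*a33*c21*c32 + a23*a33*c31*c33 + a31*a33*c11*c12 + a31*a33*c12*c22 + a31*a33*c13*c32 + a32*a33*c12*c21 + a32*a33*c22*c22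 + a32*a33*c23*c32 + a33*a33*c12*c31 + a33*a33*c22*c32 + a33*a33*c32*c33"
  by (simp add: trword_def triple_def M3_mult M3_one M3_trace JJ_def; simp add: algebra_simps)

lemma tw_w33112: "trword (triple (JJ::'a::comm_ring_1^3^3) (M3 a11 a12 a13 a21 a22 a23 a31 a32 a33) (M3 c11 c12 c13 c21 c22 c23 c31 c32 c33)) [3,3,1,1,2] = a31*c11*c11 + a31*c12*c21 + a31*c13*c31 + a32*c11*c21 + a32*c21*c22 + a32*c23*c31 + a33*c11*c31 + a33*c21*c32 + a33*c31*c33"
  by (simp add: trword_def triple_def M3_mult M3_one M3_trace JJ_def; simp add: algebra_simps)

lemma tw_w33221: "trword (triple (JJ::'a::comm_ring_1^3^3) (M3 a11 a12 a13 a21 a22 a23 a31 a32 a33) (M3 c11 c12 c13 c21 c22 c23 c31 c32 c33)) [3,3,2,2,1] = a11*a12*c11*c31 + a11*a12*c21*c32 + a11*a12*c31*c33 + a11*a21*c12*c21 + a11*a21*c22*c22 + a11*a21*c23*c32 + a11*a31*c13*c21 + a11*a31*c22*c23 + a11*a31*c23*c33 + a11*a11*c11*c21 + a11*a11*c21*c22 + a11*a11*c23*c31 + a12*a21*c11*c21 + a12*a21*c12*c31 + a12*a21*c21*c22 + a12*a21*c22*c32 + a12*a21*c23*c31 + a12*a21*c32*c33 + a12*a22*c11*c31 + a12*a22*c21*c32 + a12*a22*c31*c33 + a12*a31*c13*c31 + a12*a31*c23*c32 + a12*a31*c33*c33 + a13*a31*c11*c21 + a13*a31*c21*c22 + a13*a31*c23*c31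 + a13*a32*c11*c31 + a13*a32*c21*c32 + a13*a32*c31*c33 + a21*a22*c12*c21 + a21*a22*c22*c22 + a21*a22*c23*c32 + a21*a32*c13*c21 + a21*a32*c22*c23 + a21*a32*c23*c33 + a22*a32*c13*c31 + a22*a32*c23*c32 + a22*a32*c33*c33 + a22*a22*c12*c31 + a22*a22*c22*c32 + a22*a22*c32*c33 + a23*a31*c12*c21 + a23*a31*c22*c22 + a23*a31*c23*c32 + a23*a32*c12*c31 + a23*a32*c22*c32 + a23*a32*c32*c33 + a31*a33*c13*c21 + a31*a33*c22*c23 + a31*a33*c23*c33 + a32*a33*c13*c31 + a32*a33*c23*c32 + a32*a33*c33*c33"
  by (simp add: trword_def triple_def M3_mult M3_one M3_trace JJ_def; simp add: algebra_simps)

lemma tw_w112213: "trword (triple (JJ::'a::comm_ring_1^3^3) (M3 a11 a12 a13 a21 a22 a23 a31 a32 a33) (M3 c11 c12 c13 c21 c22 c23 c31 c32 c33)) [1,1,2,2,1,3] = a11*a31*c21 + a12*a31*c31 + a21*a32*c21 + a22*a32*c31 + a31*a33*c21 + a32*a33*c31"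
  by (simp add: trword_def triple_def M3_mult M3_one M3_trace JJ_def; simp add: algebra_simps)

lemma tw_w113312: "trword (triple (JJ::'a::comm_ring_1^3^3) (M3 a11 a12 a13 a21 a22 a23 a31 a32 a33) (M3 c11 c12 c13 c21 c22 c23 c31 c32 c33)) [1,1,3,3,1,2] = a21*c11*c31 + a21*c21*c32 + a21*c31*c33 + a31*c12*c31 + a31*c22*c32 + a31*c32*c33"
  by (simp add: trword_def triple_def M3_mult M3_one M3_trace JJ_def; simp add: algebra_simps)

lemma tw_w221123: "trword (triple (JJ::'a::comm_ring_1^3^3) (M3 a11 a12 a13 a21 a22 a23 a31 a32 a33) (M3 c11 c12 c13 c21 c22 c23 c31 c32 c33)) [2,2,1,1,2,3] = a11*a21*a31*c12 + a11*a21*a32*c22 + a11*a21*a33*c32 + a11*a31*a32*c23 + a11*a31*a33*c33 + a11*a31*a31*c13 + a11*a11*a31*c11 + a11*a11*a32*c21 + a11*a11*a33*c31 + a12*a21*a31*c11 + a12*a21*a32*c21 + a12*a21*a33*c31 + a13*a31*a32*c21 + a13*a31*a33*c31 + a13*a31*a31*c11 + a21*a22*a31*c12 + a21*a22*a32*c22 + a21*a22*a33*c32 + a21*a31*a32*c13 + a21*a32*a33*c33 + a21*a32*a32*c23 + a23*a31*a32*c22 + a23*a31*a33*c32 + a23*a31*a31*c12 + a31*a32*a33*c23 + a31*a33*a33*c33 + a31*a31*a33*c13"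
  by (simp add: trword_def triple_def M3_mult M3_one M3_trace JJ_def; simp add: algebra_simps)

lemma tw_w223321: "trword (triple (JJ::'a::comm_ring_1^3^3) (M3 a11 a12 a13 a21 a22 a23 a31 a32 a33) (M3 c11 c12 c13 c21 c22 c23 c31 c32 c33)) [2,2,3,3,2,1] = a11*a12*a21*c11*c21 + a11*a12*a21*c21*c22 + a11*a12*a21*c23*c31 + a11*a12*a31*c11*c11 + a11*a12*a31*c12*c21 + a11*a12*a31*c13*c31 + a11*a13*a21*c11*c31 + a11*a13*a21*c21*c32 + a11*a13*a21*c31*c33 + a11*a21*a22*c11*c11 + a11*a21*a22*c12*c21 + a11*a21*a22*c13*c31 + a11*a21*a31*c11*c13 + a11*a21*a31*c12*c23 + a11*a21*a31*c13*c33 + a11*a21*a21*c11*c12 + a11*a21*a21*c12*c22 + a11*a21*a21*c13*c32 + a11*a22*a23*c11*c31 + a11*a22*a23*c21*c32 + a11*a22*a23*c31*c33 + a11*a22*a31*c11*c12 + a11*a22*a31*c12*c22 + a11*a22*a31*c13*c32 + a11*a22*a22*c11*c21 + a11*a22*a22*c21*c22 + a11*a22*a22*c23*c31 + a11*a23*a31*c11*c11 + a11*a23*a31*c12*c21 + a11*a23*a31*c13*c31 + a11*a23*a32*c11*c21 + a11*a23*a32*c21*c22 + a11*a23*a32*c23*c31 + a11*a23*a33*c11*c31 + a11*a23*a33*c21*c32 + a11*a23*a33*c31*c33 + a11*a31*a32*c11*c13 + a11*a31*a32*c12*c23 + a11*a31*a32*c13*c33 + a11*a11*a21*c11*c11 +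 a11*a11*a21*c12*c21 + a11*a11*a21*c13*c31 + a12*a13*a31*c11*c31 + a12*a13*a31*c21*c32 + a12*a13*a31*c31*c33 + a12*a21*a31*c13*c21 + a12*a21*a31*c22*c23 + a12*a21*a31*c23*c33 + a12*a21*a32*c11*c11 + a12*a21*a32*c12*c21 + a12*a21*a32*c13*c31 + a12*a21*a21*c12*c21 + a12*a21*a21*c22*c22 + a12*a21*a21*c23*c32 + a12*a22*a31*c12*c21 + a12*a22*a31*c22*c22 + a12*a22*a31*c23*c32 + a12*a22*a32*c11*c21 + a12*a22*a32*c21*c22 + a12*a22*a32*c23*c31 + a12*a23*a32*c11*c31 + a12*a23*a32*c21*c32 + a12*a23*a32*c31*c33 + a12*a31*a32*c13*c21 + a12*a31*a32*c22*c23 + a12*a31*a32*c23*c33 + a12*a31*a33*c11*c11 + a12*a31*a33*c12*c21 + a12*a31*a33*c13*c31 + a12*a32*a33*c11*c21 + a12*a32*a33*c21*c22 + a12*a32*a33*c23*c31 + a12*a33*a33*c11*c31 + a12*a33*a33*c21*c32 + a12*a33*a33*c31*c33 + a12*a12*a31*c11*c21 + a12*a12*a31*c21*c22 + a12*a12*a31*c23*c31 + a13*a21*a31*c13*c31 + a13*a21*a31*c23*c32 + a13*a21*a31*c33*c33 + a13*a21*a21*c12*c31 + a13*a21*a21*c22*c32 + a13*a21*a21*c32*c33 + a13*a22*a31*c12*c31 + a13*a22*a31*c22*c32 + a13*a22*a31*c32*c33 + a13*a31*a32*c13*c31 + a13*a31*a32*c23*c32 + a13*a31*a32*c33*c33 +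 a21*a22*a23*c12*c31 + a21*a22*a23*c22*c32 + a21*a22*a23*c32*c33 + a21*a22*a31*c11*c13 + a21*a22*a31*c12*c23 + a21*a22*a31*c13*c33 + a21*a22*a32*c11*c12 + a21*a22*a32*c12*c22 + a21*a22*a32*c13*c32 + a21*a22*a22*c12*c21 + a21*a22*a22*c22*c22 + a21*a22*a22*c23*c32 + a21*a23*a31*c11*c12 + a21*a23*a31*c12*c22 + a21*a23*a31*c13*c32 + a21*a23*a32*c12*c21 + a21*a23*a32*c22*c22 + a21*a23*a32*c23*c32 + a21*a23*a33*c12*c31 + a21*a23*a33*c22*c32 + a21*a23*a33*c32*c33 + a21*a32*a32*c11*c13 + a21*a32*a32*c12*c23 + a21*a32*a32*c13*c33 + a21*a21*a22*c11*c12 + a21*a21*a22*c12*c22 + a21*a21*a22*c13*c32 + a22*a23*a31*c13*c31 + a22*a23*a31*c23*c32 + a22*a23*a31*c33*c33 + a22*a23*a32*c12*c31 + a22*a23*a32*c22*c32 + a22*a23*a32*c32*c33 + a22*a31*a33*c11*c12 + a22*a31*a33*c12*c22 + a22*a31*a33*c13*c32 + a22*a32*a33*c12*c21 + a22*a32*a33*c22*c22 + a22*a32*a33*c23*c32 + a22*a32*a32*c13*c21 + a22*a32*a32*c22*c23 + a22*a32*a32*c23*c33 + a22*a33*a33*c12*c31 + a22*a33*a33*c22*c32 + a22*a33*a33*c32*c33 + a22*a22*a31*c13*c21 + a22*a22*a31*c22*c23 + a22*a22*a31*c23*c33 + a22*a22*a32*c12*c21 + a22*a22*a32*c22*c22 +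 a22*a22*a32*c23*c32 + a23*a31*a32*c13*c21 + a23*a31*a32*c22*c23 + a23*a31*a32*c23*c33 + a23*a31*a33*c13*c31 + a23*a31*a33*c23*c32 + a23*a31*a33*c33*c33 + a23*a31*a31*c11*c13 + a23*a31*a31*c12*c23 + a23*a31*a31*c13*c33 + a23*a32*a32*c13*c31 + a23*a32*a32*c23*c32 + a23*a32*a32*c33*c33 + a31*a32*a33*c11*c13 + a31*a32*a33*c12*c23 + a31*a32*a33*c13*c33 + a32*a33*a33*c13*c31 + a32*a33*a33*c23*c32 + a32*a33*a33*c33*c33 + a32*a32*a33*c13*c21 + a32*a32*a33*c22*c23 + a32*a32*a33*c23*c33"
  by (simp add: trword_def triple_def M3_mult M3_one M3_trace JJ_def; simp add: algebra_simps)

lemma tw_w331132: "trword (triple (JJ::'a::comm_ring_1^3^3) (M3 a11 a12 a13 a21 a22 a23 a31 a32 a33) (M3 c11 c12 c13 c21 c22 c23 c31 c32 c33)) [3,3,1,1,3,2] = a11*c11*c11*c31 + a11*c12*c21*c31 + a11*c13*c31*c31 + a12*c11*c21*c31 + a12*c21*c22*c31 + a12*c23*c31*c31 + a13*c11*c31*c31 + a13*c21*c31*c32 + a13*c31*c31*c33 + a21*c11*c11*c32 + a21*c12*c21*c32 + a21*c13*c31*c32 + a22*c11*c21*c32 + a22*c21*c22*c32 + a22*c23*c31*c32 + a23*c11*c31*c32 + a23*c21*c32*c32 + a23*c31*c32*c33 + a31*c11*c11*c33 + a31*c12*c21*c33 + a31*c13*c31*c33 + a32*c11*c21*c33 + a32*c21*c22*c33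 + a32*c23*c31*c33 + a33*c11*c31*c33 + a33*c21*c32*c33 + a33*c31*c33*c33"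
  by (simp add: trword_def triple_def M3_mult M3_one M3_trace JJ_def; simp add: algebra_simps)

lemma tw_w332231: "trword (triple (JJ::'a::comm_ring_1^3^3) (M3 a11 a12 a13 a21 a22 a23 a31 a32 a33) (M3 c11 c12 c13 c21 c22 c23 c31 c32 c33)) [3,3,2,2,3,1] = a11*a12*c11*c21*c21 + a11*a12*c11*c22*c31 + a11*a12*c21*c22*c32 + a11*a12*c21*c23*c31 + a11*a12*c21*c21*c22 + a11*a12*c22*c31*c33 + a11*a13*c11*c21*c31 + a11*a13*c11*c31*c32 + a11*a13*c21*c22*c31 + a11*a13*c21*c32*c32 + a11*a13*c23*c31*c31 + a11*a13*c31*c32*c33 + a11*a21*c11*c12*c21 + a11*a21*c11*c22*c22 + a11*a21*c11*c23*c32 + a11*a21*c12*c22*c32 + a11*a21*c12*c32*c33 + a11*a21*c12*c12*c31 + a11*a31*c11*c13*c21 + a11*a31*c11*c22*c23 + a11*a31*c11*c23*c33 + a11*a31*c12*c13*c31 + a11*a31*c12*c23*c32 + a11*a31*c12*c33*c33 + a11*a11*c11*c12*c31 + a11*a11*c11*c21*c22 + a11*a11*c11*c23*c31 + a11*a11*c11*c11*c21 + a11*a11*c12*c21*c32 + a11*a11*c12*c31*c33 + a12*a21*c11*c12*c31 + a12*a21*c11*c21*c22 + a12*a21*c11*c23*c31 + a12*a21*c11*c11*c21 + a12*a21*c12*c21*c32 + a12*a21*c12*c21*c21 + a12*a21*c12*c22*c31 + a12*a21*c12*c31*c33 + a12*a21*c21*c22*c22 + a12*a21*c21*c23*c32 +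 a12*a21*c22*c32*c33 + a12*a21*c22*c22*c32 + a12*a22*c11*c21*c21 + a12*a22*c11*c22*c31 + a12*a22*c21*c22*c32 + a12*a22*c21*c23*c31 + a12*a22*c21*c21*c22 + a12*a22*c22*c31*c33 + a12*a23*c11*c21*c31 + a12*a23*c11*c31*c32 + a12*a23*c21*c22*c31 + a12*a23*c21*c32*c32 + a12*a23*c23*c31*c31 + a12*a23*c31*c32*c33 + a12*a31*c13*c21*c21 + a12*a31*c13*c22*c31 + a12*a31*c21*c22*c23 + a12*a31*c21*c23*c33 + a12*a31*c22*c23*c32 + a12*a31*c22*c33*c33 + a13*a21*c12*c21*c31 + a13*a21*c12*c31*c32 + a13*a21*c22*c32*c32 + a13*a21*c22*c22*c31 + a13*a21*c23*c31*c32 + a13*a21*c32*c32*c33 + a13*a31*c11*c12*c31 + a13*a31*c11*c21*c22 + a13*a31*c11*c23*c31 + a13*a31*c11*c11*c21 + a13*a31*c12*c21*c32 + a13*a31*c12*c31*c33 + a13*a31*c13*c21*c31 + a13*a31*c13*c31*c32 + a13*a31*c22*c23*c31 + a13*a31*c23*c31*c33 + a13*a31*c23*c32*c32 + a13*a31*c32*c33*c33 + a13*a32*c11*c21*c21 + a13*a32*c11*c22*c31 + a13*a32*c21*c22*c32 + a13*a32*c21*c23*c31 + a13*a32*c21*c21*c22 + a13*a32*c22*c31*c33 + a13*a33*c11*c21*c31 + a13*a33*c11*c31*c32 + a13*a33*c21*c22*c31 + a13*a33*c21*c32*c32 + a13*a33*c23*c31*c31 + a13*a33*c31*c32*c33 +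 a21*a22*c11*c12*c21 + a21*a22*c11*c22*c22 + a21*a22*c11*c23*c32 + a21*a22*c12*c22*c32 + a21*a22*c12*c32*c33 + a21*a22*c12*c12*c31 + a21*a32*c11*c13*c21 + a21*a32*c11*c22*c23 + a21*a32*c11*c23*c33 + a21*a32*c12*c13*c31 + a21*a32*c12*c23*c32 + a21*a32*c12*c33*c33 + a22*a23*c12*c21*c31 + a22*a23*c12*c31*c32 + a22*a23*c22*c32*c32 + a22*a23*c22*c22*c31 + a22*a23*c23*c31*c32 + a22*a23*c32*c32*c33 + a22*a32*c13*c21*c21 + a22*a32*c13*c22*c31 + a22*a32*c21*c22*c23 + a22*a32*c21*c23*c33 + a22*a32*c22*c23*c32 + a22*a32*c22*c33*c33 + a22*a22*c12*c21*c21 + a22*a22*c12*c22*c31 + a22*a22*c21*c22*c22 + a22*a22*c21*c23*c32 + a22*a22*c22*c32*c33 + a22*a22*c22*c22*c32 + a23*a31*c11*c12*c21 + a23*a31*c11*c22*c22 + a23*a31*c11*c23*c32 + a23*a31*c12*c22*c32 + a23*a31*c12*c32*c33 + a23*a31*c12*c12*c31 + a23*a32*c12*c21*c21 + a23*a32*c12*c22*c31 + a23*a32*c13*c21*c31 + a23*a32*c13*c31*c32 + a23*a32*c21*c22*c22 + a23*a32*c21*c23*c32 + a23*a32*c22*c23*c31 + a23*a32*c22*c32*c33 + a23*a32*c22*c22*c32 + a23*a32*c23*c31*c33 + a23*a32*c23*c32*c32 + a23*a32*c32*c33*c33 + a23*a33*c12*c21*c31 + a23*a33*c12*c31*c32 +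 a23*a33*c22*c32*c32 + a23*a33*c22*c22*c31 + a23*a33*c23*c31*c32 + a23*a33*c32*c32*c33 + a31*a33*c11*c13*c21 + a31*a33*c11*c22*c23 + a31*a33*c11*c23*c33 + a31*a33*c12*c13*c31 + a31*a33*c12*c23*c32 + a31*a33*c12*c33*c33 + a32*a33*c13*c21*c21 + a32*a33*c13*c22*c31 + a32*a33*c21*c22*c23 + a32*a33*c21*c23*c33 + a32*a33*c22*c23*c32 + a32*a33*c22*c33*c33 + a33*a33*c13*c21*c31 + a33*a33*c13*c31*c32 + a33*a33*c22*c23*c31 + a33*a33*c23*c31*c33 + a33*a33*c23*c32*c32 + a33*a33*c32*c33*c33"
  by (simp add: trword_def triple_def M3_mult M3_one M3_trace JJ_def; simp add: algebra_simps)

lemma tw_w112233: "trword (triple (JJ::'a::comm_ring_1^3^3) (M3 a11 a12 a13 a21 a22 a23 a31 a32 a33) (M3 c11 c12 c13 c21 c22 c23 c31 c32 c33)) [1,1,2,2,3,3] = a11*a31*c11*c11 + a11*a31*c12*c21 + a11*a31*c13*c31 + a12*a31*c11*c21 + a12*a31*c21*c22 + a12*a31*c23*c31 + a13*a31*c11*c31 + a13*a31*c21*c32 + a13*a31*c31*c33 + a21*a32*c11*c11 + a21*a32*c12*c21 + a21*a32*c13*c31 + a22*a32*c11*c21 + a22*a32*c21*c22 + a22*a32*c23*c31 + a23*a32*c11*c31 + a23*a32*c21*c32 + a23*a32*c31*c33 + a31*a33*c11*c11 + a31*a33*c12*c21 + a31*a33*c13*c31 + a32*a33*c11*c21 + a32*a33*c21*c22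 + a32*a33*c23*c31 + a33*a33*c11*c31 + a33*a33*c21*c32 + a33*a33*c31*c33"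
  by (simp add: trword_def triple_def M3_mult M3_one M3_trace JJ_def; simp add: algebra_simps)

lemma degen:
  fixes p q c11 c12 c13 c21 c22 c23 c32 c33 d11 d22 d33 :: "'a::field_char_0"
  assumes q: "q \<noteq> 0" and dl: "p*p - p*q + q*q = 0"
  and L1: "p*(d11 - c11) + q*(d22 - c22) = 0" and L2: "p*(d22 - c22) + q*(d33 - c33) = 0"
  and H1: "c11*c21 + c21*c22 + c22*c32 + c32*c33 = c21*d11 + c21*d22 + c32*d22 + c32*d33"
  and H2: "c11*c12*p + c12*c22*p + c13*c21*q + c13*c32*p + c22*c23*q + c23*c33*q = c12*d11*p + c12*d22*p + c13*c21*q + c13*c32*p + c23*d22*q + c23*d33*q"
  and H3: "c11*c13*p*q + c12*c23*p*q + c13*c33*p*q = c12*c23*p*q + c13*d11*p*q + c13*d33*p*q"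
  and H5: "c12*c21*p + c22*c22*p + c23*c32*p + c23*c32*q + c33*c33*q = c12*c21*p + c23*c32*p + c23*c32*q + d22*d22*p + d33*d33*q"
  and tC: "c11 + c22 + c33 = 0"
  and sC: "c11*c11 + c22*c22 + c33*c33 + 2*(c12*c21 + c23*c32) = 0"
  and sD: "d11*d11 + d22*d22 + d33*d33 + 2*(c12*c21 + c23*c32) = 0"
  and dC: "c11*c22*c33 + c13*c21*c32 - c11*c23*c32 - c12*c21*c33 = 0"
  shows "d11 = c11 \<and> d22 = c22 \<and> d33 = c33"
proof -
  define w where "w = -p/q"
  have p: "p = -(w*q)" using q by (simp add: w_def)
  have "q*q*(w*w + w + 1) = 0" using dl p by algebra
  then have w3: "w*w + w + 1 = 0" using q by simp
  have "q*((d22 - c22) - w*(d11 - c11)) = 0" using L1 p by algebra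
  then have "(d22 - c22) - w*(d11 - c11) = 0" using q by simp
  then have x2: "d22 = c22 + w*(d11 - c11)" by algebra
  have "q*((d33 - c33) - w*(d22 - c22)) = 0" using L2 p by algebra
  then have "(d33 - c33) - w*(d22 - c22) = 0" using q by simp
  then have x3: "d33 = c33 + w*w*(d11 - c11)" using x2 by algebra
  define t where "t = d11 - c11"
  have d11: "d11 = c11 + t" by (simp add: t_def)
  have t0: "t = 0"
  proof (rule ccontr)
    assume t: "t \<noteq> 0"
    have w0: "w \<noteq> 0" using w3 by auto
    have w1: "1 + w \<noteq> 0" using w3 w0 by (metis add.commute add_cancel_left_right mult_eq_0_iff w3 distrib_right mult_1 )
    have "t*((1+w)*c21 - c32) = 0" using H1 d11 x2 x3 w3 unfolding t_def by algebra
    then have e1: "c32 = (1+w)*c21" using t by simp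
    have "q*t*(c12 - c23) = 0" using H2 d11 x2 x3 w3 p unfolding t_def by algebra
    then have e2: "c23 = c12" using t q by simp
    have "q*q*t*(1+w)*c13 = 0" using H3 d11 x2 x3 w3 p unfolding t_def by algebra
    then have e3: "c13 = 0" using t q w1 by simp
    have "t*(c11 + w*c22 - (1+w)*c33) = 0" using sC sD d11 x2 x3 w3 unfolding t_def by algebra
    then have e6: "c11 + w*c22 - (1+w)*c33 = 0" using t by simp
    have c22: "c22 = w*w*c33" using e6 tC w3 by algebra
    have c11: "c11 = w*c33" using e6 tC w3 by algebra
    have "c33*c33*c33 = 0" using dC e1 e2 e3 c22 c11 w3 by algebra
    then have c33: "c33 = 0" by simp
    have "q*t*t*(w - 1) = 0" using H5 d11 x2 x3 w3 p c33 c22 unfolding t_def by algebra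
    then have "w = 1" using q t by simp
    then show False using w3 by simp
  qed
  show ?thesis using t0 x2 x3 unfolding t_def by simp
qed

lemma core1:
  fixes a12 a13 a21 a22 a23 a33 al b12 b13 b21 b22 b23 b33 be :: "'a::field_char_0"
  assumes al: "al \<noteq> 0"
  and nA: "nilp3 (M3 0 a12 a13 a21 a22 a23 al 0 a33)"
  and nB: "nilp3 (M3 0 b12 b13 b21 b22 b23 be 0 b33)"
  and nC: "nilp3 (M3 c11 c12 c13 c21 c22 c23 c31 c32 c33)"
  and nD: "nilp3 (M3 d11 d12 d13 d21 d22 d23 d31 d32 d33)"
  and E: "\<And>w. w \<in> S33 \<Longrightarrow> trword (triple JJ (M3 0 a12 a13 a21 a22 a23 al 0 a33) (M3 c11 c12 c13 c21 c22 c23 c31 c32 c33)) w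
     = trword (triple JJ (M3 0 b12 b13 b21 b22 b23 be 0 b33) (M3 d11 d12 d13 d21 d22 d23 d31 d32 d33)) w"
  shows "M3 0 a12 a13 a21 a22 a23 al 0 a33 = M3 0 b12 b13 b21 b22 b23 be 0 b33 \<and>
         M3 c11 c12 c13 c21 c22 c23 c31 c32 c33 = M3 d11 d12 d13 d21 d22 d23 d31 d32 d33"
proof -
  note nA' = nA[unfolded nilp3_M3] and nB' = nB[unfolded nilp3_M3]
  note nC' = nC[unfolded nilp3_M3] and nD' = nD[unfolded nilp3_M3]
  have be: "be = al" using E[OF m_w112, unfolded tw_w112] by simp
  have b21: "b21 = a21" using E[OF m_w12, unfolded tw_w12] by simp
  have b33: "b33 = a33" using E[OF m_w1122, unfolded tw_w1122] al by (simp add: be)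
  have b22: "b22 = a22" using nA' nB' b33 by (metis add_left_cancel add_right_cancel add_0)
  have "al * (b12 - a12) = 0" using E[OF m_w112212, unfolded tw_w112212] al be b21 b33
    by algebra
  then have b12: "b12 = a12" using al by simp
  have "2 * al * (b13 - a13) = 0" using nA' nB' be b21 b33 b22 b12 by algebra
  then have b13: "b13 = a13" using al by simp
  have "al * (b23 - a23) = 0" using E[OF m_w122, unfolded tw_w122] be b21 b22 b12 by algebra
  then have b23: "b23 = a23" using al by simp
  note bs = be b21 b22 b12 b13 b23 b33
  have d31: "d31 = c31" using E[OF m_w113, unfolded tw_w113] by simp
  have "al * (d21 - c21) = 0" using E[OF m_w11213, unfolded tw_w11213] bs d31 by algebra
  then have d21: "d21 = c21" using al by simp
  have d32: "d32 = c32" using E[OF m_w13, unfolded tw_w13] d21 by simp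
  have "al * (d11 - c11) = 0" using E[OF m_w1123, unfolded tw_w1123] bs d31 d21 d32 by algebra
  then have d11: "d11 = c11" using al by simp
  have "al * (d33 - c33) = 0" using E[OF m_w1132, unfolded tw_w1132] bs d31 d21 d32 d11 by algebra
  then have d33: "d33 = c33" using al by simp
  have d22: "d22 = c22" using nC' nD' d11 d33 by (metis add_left_cancel add_right_cancel add_0)
  have "al * (d12 - c12) = 0" using E[OF m_w123, unfolded tw_w123] bs d31 d21 d32 d11 d33 d22 by algebra
  then have d12: "d12 = c12" using al by simp
  have "al * (d23 - c23) = 0" using E[OF m_w132, unfolded tw_w132] bs d31 d21 d32 d11 d33 d22 d12 by algebra
  then have d23: "d23 = c23" using al by simp
  have "al * (d13 - c13) = 0" using E[OF m_w23, unfolded tw_w23] bs d31 d21 d32 d11 d33 d22 d12 d23 by algebra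
  then have d13: "d13 = c13" using al by simp
  show ?thesis by (simp add: bs d31 d21 d32 d11 d33 d22 d12 d23 d13)
qed

lemma core2:
  fixes c12 c13 c21 c22 c23 c33 al d12 d13 d21 d22 d23 d33 be :: "'a::field_char_0"
  assumes al: "al \<noteq> 0"
  and nA: "nilp3 (M3 a11 a12 a13 a21 a22 a23 a31 a32 a33)"
  and nB: "nilp3 (M3 b11 b12 b13 b21 b22 b23 b31 b32 b33)"
  and nC: "nilp3 (M3 0 c12 c13 c21 c22 c23 al 0 c33)"
  and nD: "nilp3 (M3 0 d12 d13 d21 d22 d23 be 0 d33)"
  and E: "\<And>w. w \<in> S33 \<Longrightarrow> trword (triple JJ (M3 a11 a12 a13 a21 a22 a23 a31 a32 a33) (M3 0 c12 c13 c21 c22 c23 al 0 c33)) w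
     = trword (triple JJ (M3 b11 b12 b13 b21 b22 b23 b31 b32 b33) (M3 0 d12 d13 d21 d22 d23 be 0 d33)) w"
  shows "M3 a11 a12 a13 a21 a22 a23 a31 a32 a33 = M3 b11 b12 b13 b21 b22 b23 b31 b32 b33 \<and>
         M3 0 c12 c13 c21 c22 c23 al 0 c33 = M3 0 d12 d13 d21 d22 d23 be 0 d33"
proof -
  note nA' = nA[unfolded nilp3_M3] and nB' = nB[unfolded nilp3_M3]
  note nC' = nC[unfolded nilp3_M3] and nD' = nD[unfolded nilp3_M3]
  have be: "be = al" using E[OF m_w113, unfolded tw_w113] by simp
  have d21: "d21 = c21" using E[OF m_w13, unfolded tw_w13] by simp
  have d33: "d33 = c33" using E[OF m_w1133, unfolded tw_w1133] al by (simp add: be)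
  have d22: "d22 = c22" using nC' nD' d33 by (metis add_left_cancel add_right_cancel add_0)
  have "al * (d12 - c12) = 0" using E[OF m_w113313, unfolded tw_w113313] al be d21 d33 by algebra
  then have d12: "d12 = c12" using al by simp
  have "2 * al * (d13 - c13) = 0" using nC' nD' be d21 d33 d22 d12 by algebra
  then have d13: "d13 = c13" using al by simp
  have "al * (d23 - c23) = 0" using E[OF m_w133, unfolded tw_w133] be d21 d22 d12 by algebra
  then have d23: "d23 = c23" using al by simp
  note ds = be d21 d22 d12 d13 d23 d33
  have b31: "b31 = a31" using E[OF m_w112, unfolded tw_w112] by simp
  have "al * (b32 - a32) = 0" using E[OF m_w11213, unfolded tw_w11213] ds b31 by algebra
  then have b32: "b32 = a32" using al by simp
  have b21: "b21 = a21" using E[OF m_w12, unfolded tw_w12] b32 by simp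
  have "al * (b33 - a33) = 0" using E[OF m_w1123, unfolded tw_w1123] ds b31 b21 b32 by algebra
  then have b33: "b33 = a33" using al by simp
  have "al * (b11 - a11) = 0" using E[OF m_w1132, unfolded tw_w1132] ds b31 b21 b32 b33 by algebra
  then have b11: "b11 = a11" using al by simp
  have b22: "b22 = a22" using nA' nB' b11 b33 by (metis add_left_cancel add_right_cancel add_0)
  have "al * (b23 - a23) = 0" using E[OF m_w123, unfolded tw_w123] ds b31 b21 b32 b11 b33 b22 by algebra
  then have b23: "b23 = a23" using al by simp
  have "al * (b12 - a12) = 0" using E[OF m_w132, unfolded tw_w132] ds b31 b21 b32 b11 b33 b22 b23 by algebra
  then have b12: "b12 = a12" using al by simp
  have "al * (b13 - a13) = 0" using E[OF m_w23, unfolded tw_w23] ds b31 b21 b32 b11 b33 b22 b23 b12 by algebra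
  then have b13: "b13 = a13" using al by simp
  show ?thesis by (simp add: ds b31 b21 b32 b11 b33 b22 b12 b23 b13)
qed

lemma core3:
  fixes p q a12 a13 a22 a33 pb qb b12 b13 b22 b33 :: "'a::field_char_0"
  assumes pq: "p * q \<noteq> 0"
  and nA: "nilp3 (M3 0 a12 a13 p a22 0 0 q a33)"
  and nB: "nilp3 (M3 0 b12 b13 pb b22 0 0 qb b33)"
  and nC: "nilp3 (M3 c11 c12 c13 c21 c22 c23 0 c32 c33)"
  and nD: "nilp3 (M3 d11 d12 d13 d21 d22 d23 0 d32 d33)"
  and E: "\<And>w. w \<in> S33 \<Longrightarrow> trword (triple JJ (M3 0 a12 a13 p a22 0 0 q a33) (M3 c11 c12 c13 c21 c22 c23 0 c32 c33)) w
     = trword (triple JJ (M3 0 b12 b13 pb b22 0 0 qb b33) (M3 d11 d12 d13 d21 d22 d23 0 d32 d33)) w"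
  shows "M3 0 a12 a13 p a22 0 0 q a33 = M3 0 b12 b13 pb b22 0 0 qb b33 \<and>
         M3 c11 c12 c13 c21 c22 c23 0 c32 c33 = M3 d11 d12 d13 d21 d22 d23 0 d32 d33"
proof -
  note nA' = nA[unfolded nilp3_M3] and nB' = nB[unfolded nilp3_M3]
  note nC' = nC[unfolded nilp3_M3] and nD' = nD[unfolded nilp3_M3]
  have p0: "p \<noteq> 0" and q0: "q \<noteq> 0" using pq by auto
  have e1: "pb * qb = p * q" using E[OF m_w1122, unfolded tw_w1122] by algebra
  have "p * q * (pb - p) = 0" using E[OF m_w112212, unfolded tw_w112212] e1 by algebra
  then have pb: "pb = p" using pq by simp
  have "p * (qb - q) = 0" using e1 pb by algebra
  then have qb: "qb = q" using p0 by simp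
  have ta: "a33 = - a22" using nA' by algebra
  have tb: "b33 = - b22" using nB' by algebra
  have "p * (b22 - a22) = 0" using E[OF m_w122, unfolded tw_w122] pb qb ta tb by algebra
  then have b22: "b22 = a22" using p0 by simp
  then have b33: "b33 = a33" using ta tb by simp
  have "2 * p * (b12 - a12) = 0" using nA' nB' pb qb b22 b33 by algebra
  then have b12: "b12 = a12" using p0 by simp
  have "p * q * (b13 - a13) = 0" using nA' nB' pb qb b22 b33 b12 by algebra
  then have b13: "b13 = a13" using pq by simp
  note bs = pb qb b22 b33 b12 b13
  have "p * (d32 - c32) = 0" using E[OF m_w1132, unfolded tw_w1132] bs by algebra
  then have d32: "d32 = c32" using p0 by simp
  have d21: "d21 = c21" using E[OF m_w13, unfolded tw_w13] d32 by simp
  have "p * (q * (d23 - c23) + a22 * (d22 - c22)) = 0"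
    using E[OF m_w2213, unfolded tw_w2213] bs d32 d21 ta by algebra
  then have L4: "q * (d23 - c23) + a22 * (d22 - c22) = 0" using p0 by simp
  have "p * (q * (d12 - c12) + a22 * (d11 - c11)) = 0"
    using E[OF m_w2231, unfolded tw_w2231] bs d32 d21 ta by algebra
  then have L5: "q * (d12 - c12) + a22 * (d11 - c11) = 0" using p0 by simp
  have L1: "p * (d11 - c11) + q * (d22 - c22) = 0"
    using E[OF m_w123, unfolded tw_w123] bs d32 d21 by algebra
  have L2: "p * (d22 - c22) + q * (d33 - c33) = 0"
    using E[OF m_w132, unfolded tw_w132] bs d32 d21 by algebra
  have L0: "(d11 - c11) + (d22 - c22) + (d33 - c33) = 0" using nC' nD' by algebra
  have "q * (a22 * (p * (d11 - c11) + q * (d33 - c33))) = 0"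
    using E[OF m_w23, unfolded tw_w23] bs d32 d21 ta L4 L5 by algebra
  then have L3: "a22 * (p * (d11 - c11) + q * (d33 - c33)) = 0" using q0 by simp
  have diag: "d11 = c11 \<and> d22 = c22 \<and> d33 = c33 \<and> d12 = c12 \<and> d23 = c23"
  proof (cases "a22 = 0")
    case False
    then have L3': "p * (d11 - c11) + q * (d33 - c33) = 0" using L3 by simp
    have "3 * p * (d22 - c22) = 0" using L0 L1 L2 L3' by algebra
    then have x22: "d22 = c22" using p0 by simp
    then have "p * (d11 - c11) = 0" using L1 by simp
    then have x11: "d11 = c11" using p0 by simp
    then have x33: "d33 = c33" using L0 x22 by simp
    have x12: "d12 = c12" using L5 x11 q0 by simp
    have x23: "d23 = c23" using L4 x22 q0 by simp
    show ?thesis using x11 x22 x33 x12 x23 by simp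
  next
    case True
    have "2 * p * a12 = 0" using nA' True ta by algebra
    then have a12: "a12 = 0" using p0 by simp
    have "p * q * a13 = 0" using nA' True ta a12 by algebra
    then have a13: "a13 = 0" using pq by simp
    have x12: "d12 = c12" using L5 True q0 by simp
    have x23: "d23 = c23" using L4 True q0 by simp
    have "(p*p - p*q + q*q) * (d22 - c22) = 0" using L0 L1 L2 by algebra
    then consider "d22 = c22" | "p*p - p*q + q*q = 0" by auto
    then show ?thesis
    proof cases
      case 1
      then have "p * (d11 - c11) = 0" using L1 by simp
      then have x11: "d11 = c11" using p0 by simp
      then have x33: "d33 = c33" using L0 1 by simp
      show ?thesis using x11 1 x33 x12 x23 by simp
    next
      case 2
      have d13: "d13 = c13"
      proof -
        have "p * q * (d13 - c13) = 0"
          using E[OF m_w223, unfolded tw_w223] bs d32 d21 ta True a12 a13 x12 x23 L0 L1 L2 by algebra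
        then show ?thesis using pq by simp
      qed
      have "d11 = c11 \<and> d22 = c22 \<and> d33 = c33"
      proof (rule degen[OF q0 2 L1 L2])
        show "c11*c21 + c21*c22 + c22*c32 + c32*c33 = c21*d11 + c21*d22 + c32*d22 + c32*d33"
          using E[OF m_w133, unfolded tw_w133] d32 d21 by algebra
        show "c11*c12*p + c12*c22*p + c13*c21*q + c13*c32*p + c22*c23*q + c23*c33*q = c12*d11*p + c12*d22*p + c13*c21*q + c13*c32*p + c23*d22*q + c23*d33*q"
          using E[OF m_w233, unfolded tw_w233] bs d32 d21 ta True a12 a13 x12 x23 d13 by algebra
        show "c11*c13*p*q + c12*c23*p*q + c13*c33*p*q = c12*c23*p*q + c13*d11*p*q + c13*d33*p*q"
          using E[OF m_w2233, unfolded tw_w2233] bs d32 d21 ta True a12 a13 x12 x23 d13 by algebra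
        show "c12*c21*p + c22*c22*p + c23*c32*p + c23*c32*q + c33*c33*q = c12*c21*p + c23*c32*p + c23*c32*q + d22*d22*p + d33*d33*q"
          using E[OF m_w3321, unfolded tw_w3321] bs d32 d21 ta True a12 a13 x12 x23 d13 by algebra
        show "c11 + c22 + c33 = 0" using nC' by simp
        show "c11*c11 + c22*c22 + c33*c33 + 2*(c12*c21 + c23*c32) = 0" using nC' by simp
        show "d11*d11 + d22*d22 + d33*d33 + 2*(c12*c21 + c23*c32) = 0" using nD' d32 d21 x12 x23 by simp
        show "c11*c22*c33 + c13*c21*c32 - c11*c23*c32 - c12*c21*c33 = 0" using nC' by simp
      qed
      then show ?thesis using x12 x23 by simp
    qed
  qed
  have "p * q * (d13 - c13) = 0"
    using E[OF m_w223, unfolded tw_w223] bs d32 d21 ta diag by algebra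
  then have d13: "d13 = c13" using pq by simp
  show ?thesis using bs d32 d21 diag d13 by simp
qed

lemma core4:
  fixes p q c12 c13 c22 c33 pb qb d12 d13 d22 d33 :: "'a::field_char_0"
  assumes pq: "p * q \<noteq> 0"
  and nA: "nilp3 (M3 a11 a12 a13 a21 a22 a23 0 a32 a33)"
  and nB: "nilp3 (M3 b11 b12 b13 b21 b22 b23 0 b32 b33)"
  and nC: "nilp3 (M3 0 c12 c13 p c22 0 0 q c33)"
  and nD: "nilp3 (M3 0 d12 d13 pb d22 0 0 qb d33)"
  and E: "\<And>w. w \<in> S33 \<Longrightarrow> trword (triple JJ (M3 a11 a12 a13 a21 a22 a23 0 a32 a33) (M3 0 c12 c13 p c22 0 0 q c33)) w
     = trword (triple JJ (M3 b11 b12 b13 b21 b22 b23 0 b32 b33) (M3 0 d12 d13 pb d22 0 0 qb d33)) w"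
  shows "M3 a11 a12 a13 a21 a22 a23 0 a32 a33 = M3 b11 b12 b13 b21 b22 b23 0 b32 b33 \<and>
         M3 0 c12 c13 p c22 0 0 q c33 = M3 0 d12 d13 pb d22 0 0 qb d33"
proof -
  note nA' = nA[unfolded nilp3_M3] and nB' = nB[unfolded nilp3_M3]
  note nC' = nC[unfolded nilp3_M3] and nD' = nD[unfolded nilp3_M3]
  have p0: "p \<noteq> 0" and q0: "q \<noteq> 0" using pq by auto
  have e1: "pb * qb = p * q" using E[OF m_w1133, unfolded tw_w1133] by algebra
  have "p * q * (pb - p) = 0" using E[OF m_w113313, unfolded tw_w113313] e1 by algebra
  then have pb: "pb = p" using pq by simp
  have "p * (qb - q) = 0" using e1 pb by algebra
  then have qb: "qb = q" using p0 by simp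
  have ta: "c33 = - c22" using nC' by algebra
  have tb: "d33 = - d22" using nD' by algebra
  have "p * (d22 - c22) = 0" using E[OF m_w133, unfolded tw_w133] pb qb ta tb by algebra
  then have d22: "d22 = c22" using p0 by simp
  then have d33: "d33 = c33" using ta tb by simp
  have "2 * p * (d12 - c12) = 0" using nC' nD' pb qb d22 d33 by algebra
  then have d12: "d12 = c12" using p0 by simp
  have "p * q * (d13 - c13) = 0" using nC' nD' pb qb d22 d33 d12 by algebra
  then have d13: "d13 = c13" using pq by simp
  note ds = pb qb d22 d33 d12 d13
  have "p * (b32 - a32) = 0" using E[OF m_w1123, unfolded tw_w1123] ds by algebra
  then have b32: "b32 = a32" using p0 by simp
  have b21: "b21 = a21" using E[OF m_w12, unfolded tw_w12] b32 by simp
  have "p * (q * (b23 - a23) + c22 * (b22 - a22)) = 0"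
    using E[OF m_w3312, unfolded tw_w3312] ds b32 b21 ta by algebra
  then have L4: "q * (b23 - a23) + c22 * (b22 - a22) = 0" using p0 by simp
  have "p * (q * (b12 - a12) + c22 * (b11 - a11)) = 0"
    using E[OF m_w3321, unfolded tw_w3321] ds b32 b21 ta by algebra
  then have L5: "q * (b12 - a12) + c22 * (b11 - a11) = 0" using p0 by simp
  have L1: "p * (b11 - a11) + q * (b22 - a22) = 0"
    using E[OF m_w132, unfolded tw_w132] ds b32 b21 by algebra
  have L2: "p * (b22 - a22) + q * (b33 - a33) = 0"
    using E[OF m_w123, unfolded tw_w123] ds b32 b21 by algebra
  have L0: "(b11 - a11) + (b22 - a22) + (b33 - a33) = 0" using nA' nB' by algebra
  have "q * (c22 * (p * (b11 - a11) + q * (b33 - a33))) = 0"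
    using E[OF m_w23, unfolded tw_w23] ds b32 b21 ta L4 L5 by algebra
  then have L3: "c22 * (p * (b11 - a11) + q * (b33 - a33)) = 0" using q0 by simp
  have diag: "b11 = a11 \<and> b22 = a22 \<and> b33 = a33 \<and> b12 = a12 \<and> b23 = a23"
  proof (cases "c22 = 0")
    case False
    then have L3': "p * (b11 - a11) + q * (b33 - a33) = 0" using L3 by simp
    have "3 * p * (b22 - a22) = 0" using L0 L1 L2 L3' by algebra
    then have x22: "b22 = a22" using p0 by simp
    then have "p * (b11 - a11) = 0" using L1 by simp
    then have x11: "b11 = a11" using p0 by simp
    then have x33: "b33 = a33" using L0 x22 by simp
    have x12: "b12 = a12" using L5 x11 q0 by simp
    have x23: "b23 = a23" using L4 x22 q0 by simp
    show ?thesis using x11 x22 x33 x12 x23 by simp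
  next
    case True
    have "2 * p * c12 = 0" using nC' True ta by algebra
    then have c12: "c12 = 0" using p0 by simp
    have "p * q * c13 = 0" using nC' True ta c12 by algebra
    then have c13: "c13 = 0" using pq by simp
    have x12: "b12 = a12" using L5 True q0 by simp
    have x23: "b23 = a23" using L4 True q0 by simp
    have "(p*p - p*q + q*q) * (b22 - a22) = 0" using L0 L1 L2 by algebra
    then consider "b22 = a22" | "p*p - p*q + q*q = 0" by auto
    then show ?thesis
    proof cases
      case 1
      then have "p * (b11 - a11) = 0" using L1 by simp
      then have x11: "b11 = a11" using p0 by simp
      then have x33: "b33 = a33" using L0 1 by simp
      show ?thesis using x11 1 x33 x12 x23 by simp
    next
      case 2
      have b13: "b13 = a13"
      proof -
        have "p * q * (b13 - a13) = 0"
          using E[OF m_w233, unfolded tw_w233] ds b32 b21 ta True c12 c13 x12 x23 L0 L1 L2 by algebra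
        then show ?thesis using pq by simp
      qed
      have "b11 = a11 \<and> b22 = a22 \<and> b33 = a33"
      proof (rule degen[OF q0 2 L1 L2])
        show "a11*a21 + a21*a22 + a22*a32 + a32*a33 = a21*b11 + a21*b22 + a32*b22 + a32*b33"
          using E[OF m_w122, unfolded tw_w122] b32 b21 by algebra
        show "a11*a12*p + a12*a22*p + a13*a21*q + a13*a32*p + a22*a23*q + a23*a33*q = a12*b11*p + a12*b22*p + a13*a21*q + a13*a32*p + a23*b22*q + a23*b33*q"
          using E[OF m_w223, unfolded tw_w223] ds b32 b21 ta True c12 c13 x12 x23 b13 by algebra
        show "a11*a13*p*q + a12*a23*p*q + a13*a33*p*q = a12*a23*p*q + a13*b11*p*q + a13*b33*p*q"
          using E[OF m_w2233, unfolded tw_w2233] ds b32 b21 ta True c12 c13 x12 x23 b13 by algebra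
        show "a12*a21*p + a22*a22*p + a23*a32*p + a23*a32*q + a33*a33*q = a12*a21*p + a23*a32*p + a23*a32*q + b22*b22*p + b33*b33*q"
          using E[OF m_w2231, unfolded tw_w2231] ds b32 b21 ta True c12 c13 x12 x23 b13 by algebra
        show "a11 + a22 + a33 = 0" using nA' by simp
        show "a11*a11 + a22*a22 + a33*a33 + 2*(a12*a21 + a23*a32) = 0" using nA' by simp
        show "b11*b11 + b22*b22 + b33*b33 + 2*(a12*a21 + a23*a32) = 0" using nB' b32 b21 x12 x23 by simp
        show "a11*a22*a33 + a13*a21*a32 - a11*a23*a32 - a12*a21*a33 = 0" using nA' by simp
      qed
      then show ?thesis using x12 x23 by simp
    qed
  qed
  have "p * q * (b13 - a13) = 0"
    using E[OF m_w233, unfolded tw_w233] ds b32 b21 ta diag by algebra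
  then have b13: "b13 = a13" using pq by simp
  show ?thesis using ds b32 b21 diag b13 by simp
qed

lemma perm3: assumes "{i,j,k} = {1,2,3::nat}"
  shows "(i=1 \<and> j=2 \<and> k=3) \<or> (i=1 \<and> j=3 \<and> k=2) \<or> (i=2 \<and> j=1 \<and> k=3) \<or> (i=2 \<and> j=3 \<and> k=1) \<or> (i=3 \<and> j=1 \<and> k=2) \<or> (i=3 \<and> j=2 \<and> k=1)"
proof -
  have "i \<in> {1,2,3}" "j \<in> {1,2,3}" "k \<in> {1,2,3}" "1 \<in> {i,j,k}" "2 \<in> {i,j,k}" "3 \<in> {i,j,k}"
    using assms by blast+
  then have "i = 1 \<or> i = 2 \<or> i = 3" "j = 1 \<or> j = 2 \<or> j = 3" "k = 1 \<or> k = 2 \<or> k = 3"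
    "1 = i \<or> 1 = j \<or> 1 = k" "2 = i \<or> 2 = j \<or> 2 = k" "3 = i \<or> 3 = j \<or> 3 = k" by auto
  then show ?thesis by presburger
qed

lemma P33'_cases: assumes "w \<in> P33'"
  shows "w = [1,1,2,2,3] \<or> w = [1,1,3,3,2] \<or> w = [2,2,1,1,3] \<or> w = [2,2,3,3,1] \<or> w = [3,3,1,1,2] \<or> w = [3,3,2,2,1] \<or>
         w = [1,1,2,2,1,3] \<or> w = [1,1,3,3,1,2] \<or> w = [2,2,1,1,2,3] \<or> w = [2,2,3,3,2,1] \<or> w = [3,3,1,1,3,2] \<or> w = [3,3,2,2,3,1] \<or>
         w = [1,1,2,2,3,3]"
proof -
  consider "w = [1,1,2,2,3,3]" | i j k where "{i,j,k} = {1,2,3::nat}" "w = [i,i,j,j,k] \<or> w = [i,i,j,j,i,k]"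
    using assms unfolding P33'_def by blast
  then show ?thesis
  proof cases
    case 1 then show ?thesis by simp
  next
    case (2 i j k)
    from perm3[OF 2(1)] 2(2) show ?thesis by (elim disjE conjE) simp_all
  qed
qed

lemma case5_zero:
  fixes a11 a12 a13 a21 a22 a23 a32 a33 c11 c12 c13 c21 c22 c23 c32 c33 :: "'a::field_char_0"
  assumes nA: "nilp3 (M3 a11 a12 a13 a21 a22 a23 0 a32 a33)"
  and nC: "nilp3 (M3 c11 c12 c13 c21 c22 c23 0 c32 c33)"
  and ra: "a21 * a32 = 0" and rc: "c21 * c32 = 0"
  and w: "w \<in> P33'"
  shows "trword (triple JJ (M3 a11 a12 a13 a21 a22 a23 0 a32 a33) (M3 c11 c12 c13 c21 c22 c23 0 c32 c33)) w = 0"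
proof -
  note nA' = nA[unfolded nilp3_M3] and nC' = nC[unfolded nilp3_M3]
  have fa: "(a21 = 0 \<and> a11 = 0 \<and> a33 = -a22 \<and> a22*a22 + a23*a32 = 0) \<or> (a32 = 0 \<and> a33 = 0 \<and> a22 = -a11 \<and> a11*a11 + a12*a21 = 0)"
  proof (cases "a21 = 0")
    case True
    have "a11 = 0" using nA' True by algebra
    moreover have "a33 = -a22" using nA' True \<open>a11 = 0\<close> by algebra
    moreover have "a22*a22 + a23*a32 = 0" using nA' True \<open>a11 = 0\<close> by algebra
    ultimately show ?thesis using True by blast
  next
    case False
    then have a32: "a32 = 0" using ra by simp
    have "a33 = 0" using nA' a32 by algebra
    moreover have "a22 = -a11" using nA' a32 \<open>a33 = 0\<close> by algebra
    moreover have "a11*a11 + a12*a21 = 0" using nA' a32 \<open>a33 = 0\<close> by algebra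
    ultimately show ?thesis using a32 by blast
  qed
  have fc: "(c21 = 0 \<and> c11 = 0 \<and> c33 = -c22 \<and> c22*c22 + c23*c32 = 0) \<or> (c32 = 0 \<and> c33 = 0 \<and> c22 = -c11 \<and> c11*c11 + c12*c21 = 0)"
  proof (cases "c21 = 0")
    case True
    have "c11 = 0" using nC' True by algebra
    moreover have "c33 = -c22" using nC' True \<open>c11 = 0\<close> by algebra
    moreover have "c22*c22 + c23*c32 = 0" using nC' True \<open>c11 = 0\<close> by algebra
    ultimately show ?thesis using True by blast
  next
    case False
    then have c32: "c32 = 0" using rc by simp
    have "c33 = 0" using nC' c32 by algebra
    moreover have "c22 = -c11" using nC' c32 \<open>c33 = 0\<close> by algebra
    moreover have "c11*c11 + c12*c21 = 0" using nC' c32 \<open>c33 = 0\<close> by algebra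
    ultimately show ?thesis using c32 by blast
  qed

  have w11223: "trword (triple JJ (M3 a11 a12 a13 a21 a22 a23 0 a32 a33) (M3 c11 c12 c13 c21 c22 c23 0 c32 c33)) [1,1,2,2,3] = 0"
    unfolding tw_w11223 using fa fc by (elim disjE conjE) algebra+
  have w11332: "trword (triple JJ (M3 a11 a12 a13 a21 a22 a23 0 a32 a33) (M3 c11 c12 c13 c21 c22 c23 0 c32 c33)) [1,1,3,3,2] = 0"
    unfolding tw_w11332 using fa fc by (elim disjE conjE) algebra+
  have w22113: "trword (triple JJ (M3 a11 a12 a13 a21 a22 a23 0 a32 a33) (M3 c11 c12 c13 c21 c22 c23 0 c32 c33)) [2,2,1,1,3] = 0"
    unfolding tw_w22113 using fa fc by (elim disjE conjE) algebra+
  have w22331: "trword (triple JJ (M3 a11 a12 a13 a21 a22 a23 0 a32 a33) (M3 c11 c12 c13 c21 c22 c23 0 c32 c33)) [2,2,3,3,1] = 0"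
    unfolding tw_w22331 using fa fc by (elim disjE conjE) algebra+
  have w33112: "trword (triple JJ (M3 a11 a12 a13 a21 a22 a23 0 a32 a33) (M3 c11 c12 c13 c21 c22 c23 0 c32 c33)) [3,3,1,1,2] = 0"
    unfolding tw_w33112 using fa fc by (elim disjE conjE) algebra+
  have w33221: "trword (triple JJ (M3 a11 a12 a13 a21 a22 a23 0 a32 a33) (M3 c11 c12 c13 c21 c22 c23 0 c32 c33)) [3,3,2,2,1] = 0"
    unfolding tw_w33221 using fa fc by (elim disjE conjE) algebra+
  have w112213: "trword (triple JJ (M3 a11 a12 a13 a21 a22 a23 0 a32 a33) (M3 c11 c12 c13 c21 c22 c23 0 c32 c33)) [1,1,2,2,1,3] = 0"
    unfolding tw_w112213 using fa fc by (elim disjE conjE) algebra+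
  have w113312: "trword (triple JJ (M3 a11 a12 a13 a21 a22 a23 0 a32 a33) (M3 c11 c12 c13 c21 c22 c23 0 c32 c33)) [1,1,3,3,1,2] = 0"
    unfolding tw_w113312 using fa fc by (elim disjE conjE) algebra+
  have w221123: "trword (triple JJ (M3 a11 a12 a13 a21 a22 a23 0 a32 a33) (M3 c11 c12 c13 c21 c22 c23 0 c32 c33)) [2,2,1,1,2,3] = 0"
    unfolding tw_w221123 using fa fc by (elim disjE conjE) algebra+
  have w223321: "trword (triple JJ (M3 a11 a12 a13 a21 a22 a23 0 a32 a33) (M3 c11 c12 c13 c21 c22 c23 0 c32 c33)) [2,2,3,3,2,1] = 0"
    unfolding tw_w223321 using fa fc by (elim disjE conjE) algebra+
  have w331132: "trword (triple JJ (M3 a11 a12 a13 a21 a22 a23 0 a32 a33) (M3 c11 c12 c13 c21 c22 c23 0 c32 c33)) [3,3,1,1,3,2] = 0"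
    unfolding tw_w331132 using fa fc by (elim disjE conjE) algebra+
  have w332231: "trword (triple JJ (M3 a11 a12 a13 a21 a22 a23 0 a32 a33) (M3 c11 c12 c13 c21 c22 c23 0 c32 c33)) [3,3,2,2,3,1] = 0"
    unfolding tw_w332231 using fa fc by (elim disjE conjE) algebra+
  have w112233: "trword (triple JJ (M3 a11 a12 a13 a21 a22 a23 0 a32 a33) (M3 c11 c12 c13 c21 c22 c23 0 c32 c33)) [1,1,2,2,3,3] = 0"
    unfolding tw_w112233 using fa fc by (elim disjE conjE) algebra+
  from P33'_cases[OF w] show ?thesis
    by (elim disjE) (simp_all only: w11223 w11332 w22113 w22331 w33112 w33221 w112213 w113312 w221123 w223321 w331132 w332231 w112233)
qed

lemma M3_nth:
  "M3 a11 a12 a13 a21 a22 a23 a31 a32 a33 $ 0 $ 0 = a11"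
  "M3 a11 a12 a13 a21 a22 a23 a31 a32 a33 $ 0 $ 1 = a12"
  "M3 a11 a12 a13 a21 a22 a23 a31 a32 a33 $ 0 $ 2 = a13"
  "M3 a11 a12 a13 a21 a22 a23 a31 a32 a33 $ 1 $ 0 = a21"
  "M3 a11 a12 a13 a21 a22 a23 a31 a32 a33 $ 1 $ 1 = a22"
  "M3 a11 a12 a13 a21 a22 a23 a31 a32 a33 $ 1 $ 2 = a23"
  "M3 a11 a12 a13 a21 a22 a23 a31 a32 a33 $ 2 $ 0 = a31"
  "M3 a11 a12 a13 a21 a22 a23 a31 a32 a33 $ 2 $ 1 = a32"
  "M3 a11 a12 a13 a21 a22 a23 a31 a32 a33 $ 2 $ 2 = a33"
  unfolding M3_def by simp_all

lemma case1:
  fixes A C B D :: "'a::field_char_0^3^3"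
  assumes nA: "nilp3 A" and nC: "nilp3 C" and nB: "nilp3 B" and nD: "nilp3 D"
  and al: "A$2$0 \<noteq> 0"
  and E: "\<forall>w\<in>S33. trword (triple JJ A C) w = trword (triple JJ B D) w"
  shows "trword (triple JJ A C) w = trword (triple JJ B D) w"
proof -
  obtain a11 a12 a13 a21 a22 a23 a31 a32 a33 where A: "A = M3 a11 a12 a13 a21 a22 a23 a31 a32 a33"
    using M3_entries by blast
  obtain b11 b12 b13 b21 b22 b23 b31 b32 b33 where B: "B = M3 b11 b12 b13 b21 b22 b23 b31 b32 b33"
    using M3_entries by blast
  obtain c11 c12 c13 c21 c22 c23 c31 c32 c33 where C: "C = M3 c11 c12 c13 c21 c22 c23 c31 c32 c33"
    using M3_entries by blast
  obtain d11 d12 d13 d21 d22 d23 d31 d32 d33 where D: "D = M3 d11 d12 d13 d21 d22 d23 d31 d32 d33"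
    using M3_entries by blast
  have a31: "a31 \<noteq> 0" using al A by (simp add: M3_nth)
  have "trword (triple JJ A C) [1,1,2] = trword (triple JJ B D) [1,1,2]" using E m_w112 by blast
  then have "b31 = a31" unfolding A B C D tw_w112 by simp
  then have b31: "b31 \<noteq> 0" using a31 by simp
  define bA where "bA = a32 / a31"
  define cA where "cA = -(a11 + a21*bA) / a31"
  define bB where "bB = b32 / b31"
  define cB where "cB = -(b11 + b21*bB) / b31"
  define A' where "A' = cj bA cA A"
  define C' where "C' = cj bA cA C"
  define B' where "B' = cj bB cB B"
  define D' where "D' = cj bB cB D"
  obtain x11 x12 x13 x21 x22 x23 x31 x32 x33 where X0: "A' = M3 x11 x12 x13 x21 x22 x23 x31 x32 x33"
    using M3_entries by blast
  obtain y11 y12 y13 y21 y22 y23 y31 y32 y33 where Y0: "B' = M3 y11 y12 y13 y21 y22 y23 y31 y32 y33"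
    using M3_entries by blast
  obtain z11 z12 z13 z21 z22 z23 z31 z32 z33 where Z: "C' = M3 z11 z12 z13 z21 z22 z23 z31 z32 z33"
    using M3_entries by blast
  obtain u11 u12 u13 u21 u22 u23 u31 u32 u33 where U: "D' = M3 u11 u12 u13 u21 u22 u23 u31 u32 u33"
    using M3_entries by blast
  have xe: "x11 = a11 + a21*bA + a31*cA" "x32 = - a31*bA + a32" "x31 = a31"
    using arg_cong[OF X0, of "\<lambda>M. M$0$0"] arg_cong[OF X0, of "\<lambda>M. M$2$1"] arg_cong[OF X0, of "\<lambda>M. M$2$0"]
    unfolding A'_def A cj_M3 M3_nth by simp_all
  have x11: "x11 = 0" unfolding xe cA_def using a31 by (simp add: field_simps)
  have x32: "x32 = 0" unfolding xe bA_def using a31 by (simp add: field_simps)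
  have x31: "x31 \<noteq> 0" using xe a31 by simp
  have ye: "y11 = b11 + b21*bB + b31*cB" "y32 = - b31*bB + b32"
    using arg_cong[OF Y0, of "\<lambda>M. M$0$0"] arg_cong[OF Y0, of "\<lambda>M. M$2$1"]
    unfolding B'_def B cj_M3 M3_nth by simp_all
  have y11: "y11 = 0" unfolding ye cB_def using b31 by (simp add: field_simps)
  have y32: "y32 = 0" unfolding ye bB_def using b31 by (simp add: field_simps)
  have X: "A' = M3 0 x12 x13 x21 x22 x23 x31 0 x33" using X0 x11 x32 by simp
  have Y: "B' = M3 0 y12 y13 y21 y22 y23 y31 0 y33" using Y0 y11 y32 by simp
  have tA: "trword (triple JJ A' C') w = trword (triple JJ A C) w" for w
    unfolding A'_def C'_def by (rule trword_cj)
  have tB: "trword (triple JJ B' D') w = trword (triple JJ B D) w" for w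
    unfolding B'_def D'_def by (rule trword_cj)
  have E': "trword (triple JJ (M3 0 x12 x13 x21 x22 x23 x31 0 x33) (M3 z11 z12 z13 z21 z22 z23 z31 z32 z33)) w =
            trword (triple JJ (M3 0 y12 y13 y21 y22 y23 y31 0 y33) (M3 u11 u12 u13 u21 u22 u23 u31 u32 u33)) w"
    if "w \<in> S33" for w
    using tA[of w] tB[of w] E that unfolding X Y Z U by simp
  have n1: "nilp3 (M3 0 x12 x13 x21 x22 x23 x31 0 x33)" using nilp3_cj[OF nA] unfolding X[symmetric] A'_def .
  have n2: "nilp3 (M3 0 y12 y13 y21 y22 y23 y31 0 y33)" using nilp3_cj[OF nB] unfolding Y[symmetric] B'_def .
  have n3: "nilp3 (M3 z11 z12 z13 z21 z22 z23 z31 z32 z33)" using nilp3_cj[OF nC] unfolding Z[symmetric] C'_def .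
  have n4: "nilp3 (M3 u11 u12 u13 u21 u22 u23 u31 u32 u33)" using nilp3_cj[OF nD] unfolding U[symmetric] D'_def .
  have "A' = B' \<and> C' = D'" using core1[OF x31 n1 n2 n3 n4 E'] unfolding X Y Z U .
  then show ?thesis using tA[of w] tB[of w] by simp
qed

lemma case2:
  fixes A C B D :: "'a::field_char_0^3^3"
  assumes nA: "nilp3 A" and nC: "nilp3 C" and nB: "nilp3 B" and nD: "nilp3 D"
  and al: "C$2$0 \<noteq> 0"
  and E: "\<forall>w\<in>S33. trword (triple JJ A C) w = trword (triple JJ B D) w"
  shows "trword (triple JJ A C) w = trword (triple JJ B D) w"
proof -
  obtain a11 a12 a13 a21 a22 a23 a31 a32 a33 where A: "A = M3 a11 a12 a13 a21 a22 a23 a31 a32 a33"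
    using M3_entries by blast
  obtain b11 b12 b13 b21 b22 b23 b31 b32 b33 where B: "B = M3 b11 b12 b13 b21 b22 b23 b31 b32 b33"
    using M3_entries by blast
  obtain c11 c12 c13 c21 c22 c23 c31 c32 c33 where C: "C = M3 c11 c12 c13 c21 c22 c23 c31 c32 c33"
    using M3_entries by blast
  obtain d11 d12 d13 d21 d22 d23 d31 d32 d33 where D: "D = M3 d11 d12 d13 d21 d22 d23 d31 d32 d33"
    using M3_entries by blast
  have a31: "c31 \<noteq> 0" using al C by (simp add: M3_nth)
  have "trword (triple JJ A C) [1,1,3] = trword (triple JJ B D) [1,1,3]" using E m_w113 by blast
  then have "d31 = c31" unfolding A B C D tw_w113 by simp
  then have b31: "d31 \<noteq> 0" using a31 by simp
  define bA where "bA = c32 / c31"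
  define cA where "cA = -(c11 + c21*bA) / c31"
  define bB where "bB = d32 / d31"
  define cB where "cB = -(d11 + d21*bB) / d31"
  define A' where "A' = cj bA cA A"
  define C' where "C' = cj bA cA C"
  define B' where "B' = cj bB cB B"
  define D' where "D' = cj bB cB D"
  obtain x11 x12 x13 x21 x22 x23 x31 x32 x33 where X: "A' = M3 x11 x12 x13 x21 x22 x23 x31 x32 x33"
    using M3_entries by blast
  obtain y11 y12 y13 y21 y22 y23 y31 y32 y33 where Y: "B' = M3 y11 y12 y13 y21 y22 y23 y31 y32 y33"
    using M3_entries by blast
  obtain z11 z12 z13 z21 z22 z23 z31 z32 z33 where Z0: "C' = M3 z11 z12 z13 z21 z22 z23 z31 z32 z33"
    using M3_entries by blast
  obtain u11 u12 u13 u21 u22 u23 u31 u32 u33 where U0: "D' = M3 u11 u12 u13 u21 u22 u23 u31 u32 u33"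
    using M3_entries by blast
  have xe: "z11 = c11 + c21*bA + c31*cA" "z32 = - c31*bA + c32" "z31 = c31"
    using arg_cong[OF Z0, of "\<lambda>M. M$0$0"] arg_cong[OF Z0, of "\<lambda>M. M$2$1"] arg_cong[OF Z0, of "\<lambda>M. M$2$0"]
    unfolding C'_def C cj_M3 M3_nth by simp_all
  have x11: "z11 = 0" unfolding xe cA_def using a31 by (simp add: field_simps)
  have x32: "z32 = 0" unfolding xe bA_def using a31 by (simp add: field_simps)
  have x31: "z31 \<noteq> 0" using xe a31 by simp
  have ye: "u11 = d11 + d21*bB + d31*cB" "u32 = - d31*bB + d32"
    using arg_cong[OF U0, of "\<lambda>M. M$0$0"] arg_cong[OF U0, of "\<lambda>M. M$2$1"]
    unfolding D'_def D cj_M3 M3_nth by simp_all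
  have y11: "u11 = 0" unfolding ye cB_def using b31 by (simp add: field_simps)
  have y32: "u32 = 0" unfolding ye bB_def using b31 by (simp add: field_simps)
  have Z: "C' = M3 0 z12 z13 z21 z22 z23 z31 0 z33" using Z0 x11 x32 by simp
  have U: "D' = M3 0 u12 u13 u21 u22 u23 u31 0 u33" using U0 y11 y32 by simp
  have tA: "trword (triple JJ A' C') w = trword (triple JJ A C) w" for w
    unfolding A'_def C'_def by (rule trword_cj)
  have tB: "trword (triple JJ B' D') w = trword (triple JJ B D) w" for w
    unfolding B'_def D'_def by (rule trword_cj)
  have E': "trword (triple JJ (M3 x11 x12 x13 x21 x22 x23 x31 x32 x33) (M3 0 z12 z13 z21 z22 z23 z31 0 z33)) w =
            trword (triple JJ (M3 y11 y12 y13 y21 y22 y23 y31 y32 y33) (M3 0 u12 u13 u21 u22 u23 u31 0 u33)) w"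
    if "w \<in> S33" for w
    using tA[of w] tB[of w] E that unfolding X Y Z U by simp
  have n1: "nilp3 (M3 x11 x12 x13 x21 x22 x23 x31 x32 x33)" using nilp3_cj[OF nA] unfolding X[symmetric] A'_def .
  have n2: "nilp3 (M3 y11 y12 y13 y21 y22 y23 y31 y32 y33)" using nilp3_cj[OF nB] unfolding Y[symmetric] B'_def .
  have n3: "nilp3 (M3 0 z12 z13 z21 z22 z23 z31 0 z33)" using nilp3_cj[OF nC] unfolding Z[symmetric] C'_def .
  have n4: "nilp3 (M3 0 u12 u13 u21 u22 u23 u31 0 u33)" using nilp3_cj[OF nD] unfolding U[symmetric] D'_def .
  have "A' = B' \<and> C' = D'" using core2[OF x31 n1 n2 n3 n4 E'] unfolding X Y Z U .
  then show ?thesis using tA[of w] tB[of w] by simp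
qed


lemma case3:
  fixes A C B D :: "'a::field_char_0^3^3"
  assumes nA: "nilp3 A" and nC: "nilp3 C" and nB: "nilp3 B" and nD: "nilp3 D"
  and a0: "A$2$0 = 0" and c0: "C$2$0 = 0" and al: "A$1$0 * A$2$1 \<noteq> 0"
  and E: "\<forall>w\<in>S33. trword (triple JJ A C) w = trword (triple JJ B D) w"
  shows "trword (triple JJ A C) w = trword (triple JJ B D) w"
proof -
  obtain a11 a12 a13 a21 a22 a23 a31 a32 a33 where A: "A = M3 a11 a12 a13 a21 a22 a23 a31 a32 a33"
    using M3_entries by blast
  obtain b11 b12 b13 b21 b22 b23 b31 b32 b33 where B: "B = M3 b11 b12 b13 b21 b22 b23 b31 b32 b33"
    using M3_entries by blast
  obtain c11 c12 c13 c21 c22 c23 c31 c32 c33 where C: "C = M3 c11 c12 c13 c21 c22 c23 c31 c32 c33"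
    using M3_entries by blast
  obtain d11 d12 d13 d21 d22 d23 d31 d32 d33 where D: "D = M3 d11 d12 d13 d21 d22 d23 d31 d32 d33"
    using M3_entries by blast
  have a31: "a31 = 0" using a0 A by (simp add: M3_nth)
  have c31: "c31 = 0" using c0 C by (simp add: M3_nth)
  have pq: "a21 * a32 \<noteq> 0" using al A by (simp add: M3_nth)
  have "trword (triple JJ A C) [1,1,2] = trword (triple JJ B D) [1,1,2]" using E m_w112 by blast
  then have b31: "b31 = 0" unfolding A B C D tw_w112 using a31 by simp
  have "trword (triple JJ A C) [1,1,3] = trword (triple JJ B D) [1,1,3]" using E m_w113 by blast
  then have d31: "d31 = 0" unfolding A B C D tw_w113 using c31 by simp
  have "trword (triple JJ A C) [1,1,2,2] = trword (triple JJ B D) [1,1,2,2]" using E m_w1122 by blast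
  then have "b21 * b32 = a21 * a32" unfolding A B C D tw_w1122 using a31 b31 by (simp add: mult.commute)
  then have pqb: "b21 * b32 \<noteq> 0" using pq by simp
  have a21: "a21 \<noteq> 0" and b21: "b21 \<noteq> 0" using pq pqb by auto
  define bA where "bA = - a11 / a21"
  define cA where "cA = (a21*bA*bA - a22*bA + a23 - a32*bA*bA + a33*bA) / a21"
  define bB where "bB = - b11 / b21"
  define cB where "cB = (b21*bB*bB - b22*bB + b23 - b32*bB*bB + b33*bB) / b21"
  define A' where "A' = cj bA cA A"
  define C' where "C' = cj bA cA C"
  define B' where "B' = cj bB cB B"
  define D' where "D' = cj bB cB D"
  obtain x11 x12 x13 x21 x22 x23 x31 x32 x33 where X0: "A' = M3 x11 x12 x13 x21 x22 x23 x31 x32 x33"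
    using M3_entries by blast
  obtain y11 y12 y13 y21 y22 y23 y31 y32 y33 where Y0: "B' = M3 y11 y12 y13 y21 y22 y23 y31 y32 y33"
    using M3_entries by blast
  obtain z11 z12 z13 z21 z22 z23 z31 z32 z33 where Z0: "C' = M3 z11 z12 z13 z21 z22 z23 z31 z32 z33"
    using M3_entries by blast
  obtain u11 u12 u13 u21 u22 u23 u31 u32 u33 where U0: "D' = M3 u11 u12 u13 u21 u22 u23 u31 u32 u33"
    using M3_entries by blast
  have xe: "x11 = a11 + a21*bA + a31*cA" "x31 = a31" "x21 = a21 + a31*bA" "x32 = - a31*bA + a32"
    "x23 = a21*bA*bA - a21*cA - a22*bA + a23 - a31*bA*cA + a31*bA*bA*bA - a32*bA*bA + a33*bA"
    using arg_cong[OF X0, of "\<lambda>M. M$0$0"] arg_cong[OF X0, of "\<lambda>M. M$2$0"] arg_cong[OF X0, of "\<lambda>M. M$1$0"]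
      arg_cong[OF X0, of "\<lambda>M. M$2$1"] arg_cong[OF X0, of "\<lambda>M. M$1$2"]
    unfolding A'_def A cj_M3 M3_nth by simp_all
  have x11: "x11 = 0" unfolding xe bA_def using a31 a21 by (simp add: field_simps)
  have x31: "x31 = 0" unfolding xe using a31 by simp
  have x23: "x23 = 0" unfolding xe cA_def using a31 a21 by (simp add: field_simps)
  have x2132: "x21 * x32 \<noteq> 0" unfolding xe using a31 pq by simp
  have ye: "y11 = b11 + b21*bB + b31*cB" "y31 = b31"
    "y23 = b21*bB*bB - b21*cB - b22*bB + b23 - b31*bB*cB + b31*bB*bB*bB - b32*bB*bB + b33*bB"
    using arg_cong[OF Y0, of "\<lambda>M. M$0$0"] arg_cong[OF Y0, of "\<lambda>M. M$2$0"] arg_cong[OF Y0, of "\<lambda>M. M$1$2"]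
    unfolding B'_def B cj_M3 M3_nth by simp_all
  have y11: "y11 = 0" unfolding ye bB_def using b31 b21 by (simp add: field_simps)
  have y31: "y31 = 0" unfolding ye using b31 by simp
  have y23: "y23 = 0" unfolding ye cB_def using b31 b21 by (simp add: field_simps)
  have ze: "z31 = c31" using arg_cong[OF Z0, of "\<lambda>M. M$2$0"] unfolding C'_def C cj_M3 M3_nth by simp
  have ue: "u31 = d31" using arg_cong[OF U0, of "\<lambda>M. M$2$0"] unfolding D'_def D cj_M3 M3_nth by simp
  have z31: "z31 = 0" using ze c31 by simp
  have u31: "u31 = 0" using ue d31 by simp
  have Z: "C' = M3 z11 z12 z13 z21 z22 z23 0 z32 z33" using Z0 z31 by simp
  have U: "D' = M3 u11 u12 u13 u21 u22 u23 0 u32 u33" using U0 u31 by simp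
  have X: "A' = M3 0 x12 x13 x21 x22 0 0 x32 x33" using X0 x11 x31 x23 by simp
  have Y: "B' = M3 0 y12 y13 y21 y22 0 0 y32 y33" using Y0 y11 y31 y23 by simp
  have tA: "trword (triple JJ A' C') w = trword (triple JJ A C) w" for w
    unfolding A'_def C'_def by (rule trword_cj)
  have tB: "trword (triple JJ B' D') w = trword (triple JJ B D) w" for w
    unfolding B'_def D'_def by (rule trword_cj)
  have E': "trword (triple JJ (M3 0 x12 x13 x21 x22 0 0 x32 x33) (M3 z11 z12 z13 z21 z22 z23 0 z32 z33)) w =
            trword (triple JJ (M3 0 y12 y13 y21 y22 0 0 y32 y33) (M3 u11 u12 u13 u21 u22 u23 0 u32 u33)) w"
    if "w \<in> S33" for w
    using tA[of w] tB[of w] E that unfolding X Y Z U by simp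
  have n1: "nilp3 (M3 0 x12 x13 x21 x22 0 0 x32 x33)" using nilp3_cj[OF nA] unfolding X[symmetric] A'_def .
  have n2: "nilp3 (M3 0 y12 y13 y21 y22 0 0 y32 y33)" using nilp3_cj[OF nB] unfolding Y[symmetric] B'_def .
  have n3: "nilp3 (M3 z11 z12 z13 z21 z22 z23 0 z32 z33)" using nilp3_cj[OF nC] unfolding Z[symmetric] C'_def .
  have n4: "nilp3 (M3 u11 u12 u13 u21 u22 u23 0 u32 u33)" using nilp3_cj[OF nD] unfolding U[symmetric] D'_def .
  have "A' = B' \<and> C' = D'" using core3[OF x2132 n1 n2 n3 n4 E'] unfolding X Y Z U .
  then show ?thesis using tA[of w] tB[of w] by simp
qed


lemma case4:
  fixes A C B D :: "'a::field_char_0^3^3"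
  assumes nA: "nilp3 A" and nC: "nilp3 C" and nB: "nilp3 B" and nD: "nilp3 D"
  and a0: "A$2$0 = 0" and c0: "C$2$0 = 0" and al: "C$1$0 * C$2$1 \<noteq> 0"
  and E: "\<forall>w\<in>S33. trword (triple JJ A C) w = trword (triple JJ B D) w"
  shows "trword (triple JJ A C) w = trword (triple JJ B D) w"
proof -
  obtain a11 a12 a13 a21 a22 a23 a31 a32 a33 where A: "A = M3 a11 a12 a13 a21 a22 a23 a31 a32 a33"
    using M3_entries by blast
  obtain b11 b12 b13 b21 b22 b23 b31 b32 b33 where B: "B = M3 b11 b12 b13 b21 b22 b23 b31 b32 b33"
    using M3_entries by blast
  obtain c11 c12 c13 c21 c22 c23 c31 c32 c33 where C: "C = M3 c11 c12 c13 c21 c22 c23 c31 c32 c33"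
    using M3_entries by blast
  obtain d11 d12 d13 d21 d22 d23 d31 d32 d33 where D: "D = M3 d11 d12 d13 d21 d22 d23 d31 d32 d33"
    using M3_entries by blast
  have a31: "a31 = 0" using a0 A by (simp add: M3_nth)
  have c31: "c31 = 0" using c0 C by (simp add: M3_nth)
  have pq: "c21 * c32 \<noteq> 0" using al C by (simp add: M3_nth)
  have "trword (triple JJ A C) [1,1,2] = trword (triple JJ B D) [1,1,2]" using E m_w112 by blast
  then have b31: "b31 = 0" unfolding A B C D tw_w112 using a31 by simp
  have "trword (triple JJ A C) [1,1,3] = trword (triple JJ B D) [1,1,3]" using E m_w113 by blast
  then have d31: "d31 = 0" unfolding A B C D tw_w113 using c31 by simp
  have "trword (triple JJ A C) [1,1,3,3] = trword (triple JJ B D) [1,1,3,3]" using E m_w1133 by blast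
  then have "d21 * d32 = c21 * c32" unfolding A B C D tw_w1133 using c31 d31 by (simp add: mult.commute)
  then have pqb: "d21 * d32 \<noteq> 0" using pq by simp
  have a21: "c21 \<noteq> 0" and b21: "d21 \<noteq> 0" using pq pqb by auto
  define bA where "bA = - c11 / c21"
  define cA where "cA = (c21*bA*bA - c22*bA + c23 - c32*bA*bA + c33*bA) / c21"
  define bB where "bB = - d11 / d21"
  define cB where "cB = (d21*bB*bB - d22*bB + d23 - d32*bB*bB + d33*bB) / d21"
  define A' where "A' = cj bA cA A"
  define C' where "C' = cj bA cA C"
  define B' where "B' = cj bB cB B"
  define D' where "D' = cj bB cB D"
  obtain x11 x12 x13 x21 x22 x23 x31 x32 x33 where X0: "A' = M3 x11 x12 x13 x21 x22 x23 x31 x32 x33"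
    using M3_entries by blast
  obtain y11 y12 y13 y21 y22 y23 y31 y32 y33 where Y0: "B' = M3 y11 y12 y13 y21 y22 y23 y31 y32 y33"
    using M3_entries by blast
  obtain z11 z12 z13 z21 z22 z23 z31 z32 z33 where Z0: "C' = M3 z11 z12 z13 z21 z22 z23 z31 z32 z33"
    using M3_entries by blast
  obtain u11 u12 u13 u21 u22 u23 u31 u32 u33 where U0: "D' = M3 u11 u12 u13 u21 u22 u23 u31 u32 u33"
    using M3_entries by blast
  have xe: "z11 = c11 + c21*bA + c31*cA" "z31 = c31" "z21 = c21 + c31*bA" "z32 = - c31*bA + c32"
    "z23 = c21*bA*bA - c21*cA - c22*bA + c23 - c31*bA*cA + c31*bA*bA*bA - c32*bA*bA + c33*bA"
    using arg_cong[OF Z0, of "\<lambda>M. M$0$0"] arg_cong[OF Z0, of "\<lambda>M. M$2$0"] arg_cong[OF Z0, of "\<lambda>M. M$1$0"]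
      arg_cong[OF Z0, of "\<lambda>M. M$2$1"] arg_cong[OF Z0, of "\<lambda>M. M$1$2"]
    unfolding C'_def C cj_M3 M3_nth by simp_all
  have x11: "z11 = 0" unfolding xe bA_def using c31 a21 by (simp add: field_simps)
  have x31: "z31 = 0" unfolding xe using c31 by simp
  have x23: "z23 = 0" unfolding xe cA_def using c31 a21 by (simp add: field_simps)
  have x2132: "z21 * z32 \<noteq> 0" unfolding xe using c31 pq by simp
  have ye: "u11 = d11 + d21*bB + d31*cB" "u31 = d31"
    "u23 = d21*bB*bB - d21*cB - d22*bB + d23 - d31*bB*cB + d31*bB*bB*bB - d32*bB*bB + d33*bB"
    using arg_cong[OF U0, of "\<lambda>M. M$0$0"] arg_cong[OF U0, of "\<lambda>M. M$2$0"] arg_cong[OF U0, of "\<lambda>M. M$1$2"]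
    unfolding D'_def D cj_M3 M3_nth by simp_all
  have y11: "u11 = 0" unfolding ye bB_def using d31 b21 by (simp add: field_simps)
  have y31: "u31 = 0" unfolding ye using d31 by simp
  have y23: "u23 = 0" unfolding ye cB_def using d31 b21 by (simp add: field_simps)
  have ze: "x31 = a31" using arg_cong[OF X0, of "\<lambda>M. M$2$0"] unfolding A'_def A cj_M3 M3_nth by simp
  have ue: "y31 = b31" using arg_cong[OF Y0, of "\<lambda>M. M$2$0"] unfolding B'_def B cj_M3 M3_nth by simp
  have z31: "x31 = 0" using ze a31 by simp
  have u31: "y31 = 0" using ue b31 by simp
  have Z: "C' = M3 0 z12 z13 z21 z22 0 0 z32 z33" using Z0 x11 x31 x23 by simp
  have U: "D' = M3 0 u12 u13 u21 u22 0 0 u32 u33" using U0 y11 y31 y23 by simp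
  have X: "A' = M3 x11 x12 x13 x21 x22 x23 0 x32 x33" using X0 z31 by simp
  have Y: "B' = M3 y11 y12 y13 y21 y22 y23 0 y32 y33" using Y0 u31 by simp
  have tA: "trword (triple JJ A' C') w = trword (triple JJ A C) w" for w
    unfolding A'_def C'_def by (rule trword_cj)
  have tB: "trword (triple JJ B' D') w = trword (triple JJ B D) w" for w
    unfolding B'_def D'_def by (rule trword_cj)
  have E': "trword (triple JJ (M3 x11 x12 x13 x21 x22 x23 0 x32 x33) (M3 0 z12 z13 z21 z22 0 0 z32 z33)) w =
            trword (triple JJ (M3 y11 y12 y13 y21 y22 y23 0 y32 y33) (M3 0 u12 u13 u21 u22 0 0 u32 u33)) w"
    if "w \<in> S33" for w
    using tA[of w] tB[of w] E that unfolding X Y Z U by simp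
  have n1: "nilp3 (M3 x11 x12 x13 x21 x22 x23 0 x32 x33)" using nilp3_cj[OF nA] unfolding X[symmetric] A'_def .
  have n2: "nilp3 (M3 y11 y12 y13 y21 y22 y23 0 y32 y33)" using nilp3_cj[OF nB] unfolding Y[symmetric] B'_def .
  have n3: "nilp3 (M3 0 z12 z13 z21 z22 0 0 z32 z33)" using nilp3_cj[OF nC] unfolding Z[symmetric] C'_def .
  have n4: "nilp3 (M3 0 u12 u13 u21 u22 0 0 u32 u33)" using nilp3_cj[OF nD] unfolding U[symmetric] D'_def .
  have "A' = B' \<and> C' = D'" using core4[OF x2132 n1 n2 n3 n4 E'] unfolding X Y Z U .
  then show ?thesis using tA[of w] tB[of w] by simp
qed

lemma tw112_gen: "trword (triple JJ A C) [1,1,2] = (A::'a::comm_ring_1^3^3)$2$0"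
proof -
  obtain a11 a12 a13 a21 a22 a23 a31 a32 a33 where A: "A = M3 a11 a12 a13 a21 a22 a23 a31 a32 a33"
    using M3_entries by blast
  obtain c11 c12 c13 c21 c22 c23 c31 c32 c33 where C: "C = M3 c11 c12 c13 c21 c22 c23 c31 c32 c33"
    using M3_entries by blast
  show ?thesis unfolding A C tw_w112 M3_nth ..
qed

lemma tw113_gen: "trword (triple JJ A C) [1,1,3] = (C::'a::comm_ring_1^3^3)$2$0"
proof -
  obtain a11 a12 a13 a21 a22 a23 a31 a32 a33 where A: "A = M3 a11 a12 a13 a21 a22 a23 a31 a32 a33"
    using M3_entries by blast
  obtain c11 c12 c13 c21 c22 c23 c31 c32 c33 where C: "C = M3 c11 c12 c13 c21 c22 c23 c31 c32 c33"
    using M3_entries by blast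
  show ?thesis unfolding A C tw_w113 M3_nth ..
qed

lemma tw1122_gen: "(A::'a::comm_ring_1^3^3)$2$0 = 0 \<Longrightarrow> trword (triple JJ A C) [1,1,2,2] = A$1$0 * A$2$1"
proof -
  assume a: "A$2$0 = 0"
  obtain a11 a12 a13 a21 a22 a23 a31 a32 a33 where A: "A = M3 a11 a12 a13 a21 a22 a23 a31 a32 a33"
    using M3_entries by blast
  obtain c11 c12 c13 c21 c22 c23 c31 c32 c33 where C: "C = M3 c11 c12 c13 c21 c22 c23 c31 c32 c33"
    using M3_entries by blast
  have "a31 = 0" using a unfolding A M3_nth .
  then show ?thesis unfolding A C tw_w1122 M3_nth by (simp add: mult.commute)
qed

lemma tw1133_gen: "(C::'a::comm_ring_1^3^3)$2$0 = 0 \<Longrightarrow> trword (triple JJ A C) [1,1,3,3] = C$1$0 * C$2$1"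
proof -
  assume a: "C$2$0 = 0"
  obtain a11 a12 a13 a21 a22 a23 a31 a32 a33 where A: "A = M3 a11 a12 a13 a21 a22 a23 a31 a32 a33"
    using M3_entries by blast
  obtain c11 c12 c13 c21 c22 c23 c31 c32 c33 where C: "C = M3 c11 c12 c13 c21 c22 c23 c31 c32 c33"
    using M3_entries by blast
  have "c31 = 0" using a unfolding C M3_nth .
  then show ?thesis unfolding A C tw_w1133 M3_nth by (simp add: mult.commute)
qed

lemma case5M:
  fixes A C :: "'a::field_char_0^3^3"
  assumes nA: "nilp3 A" and nC: "nilp3 C" and a0: "A$2$0 = 0" and c0: "C$2$0 = 0"
  and ra: "A$1$0 * A$2$1 = 0" and rc: "C$1$0 * C$2$1 = 0" and w: "w \<in> P33'"
  shows "trword (triple JJ A C) w = 0"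
proof -
  obtain a11 a12 a13 a21 a22 a23 a31 a32 a33 where A0: "A = M3 a11 a12 a13 a21 a22 a23 a31 a32 a33"
    using M3_entries by blast
  obtain c11 c12 c13 c21 c22 c23 c31 c32 c33 where C0: "C = M3 c11 c12 c13 c21 c22 c23 c31 c32 c33"
    using M3_entries by blast
  have a31: "a31 = 0" using a0 unfolding A0 M3_nth .
  have c31: "c31 = 0" using c0 unfolding C0 M3_nth .
  have A: "A = M3 a11 a12 a13 a21 a22 a23 0 a32 a33" using A0 a31 by simp
  have C: "C = M3 c11 c12 c13 c21 c22 c23 0 c32 c33" using C0 c31 by simp
  have "a21 * a32 = 0" using ra unfolding A M3_nth .
  moreover have "c21 * c32 = 0" using rc unfolding C M3_nth .
  ultimately show ?thesis using case5_zero[OF nA[unfolded A] nC[unfolded C] _ _ w] unfolding A C by blast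
qed

theorem lemma5p1:
  fixes A2 A3 B2 B3 :: "'a::{alg_closed_field, field_char_0}^3^3"
  defines "J2 \<equiv> matunit 1 2 + matunit 2 3"
  assumes "nilpotent_mat A2" and "nilpotent_mat A3"
      and "nilpotent_mat B2" and "nilpotent_mat B3"
      and "\<forall>w\<in>S33. trword (triple J2 A2 A3) w = trword (triple J2 B2 B3) w"
  shows "\<forall>w\<in>P33. trword (triple J2 A2 A3) w = trword (triple J2 B2 B3) w"
proof -
  have J: "J2 = JJ" unfolding J2_def by (rule J2_JJ)
  have nA: "nilp3 A2" using assms(2) by (rule nilpotent_nilp3)
  have nC: "nilp3 A3" using assms(3) by (rule nilpotent_nilp3)
  have nB: "nilp3 B2" using assms(4) by (rule nilpotent_nilp3)
  have nD: "nilp3 B3" using assms(5) by (rule nilpotent_nilp3)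
  have E: "\<forall>w\<in>S33. trword (triple JJ A2 A3) w = trword (triple JJ B2 B3) w" using assms(6) unfolding J .
  have main: "trword (triple JJ A2 A3) w = trword (triple JJ B2 B3) w" if w: "w \<in> P33" for w
  proof (cases "A2$2$0 \<noteq> 0")
    case True
    then show ?thesis by (rule case1[OF nA nC nB nD _ E])
  next
    case False
    then have a0: "A2$2$0 = 0" by simp
    show ?thesis
    proof (cases "A3$2$0 \<noteq> 0")
      case True
      then show ?thesis by (rule case2[OF nA nC nB nD _ E])
    next
      case False
      then have c0: "A3$2$0 = 0" by simp
      show ?thesis
      proof (cases "A2$1$0 * A2$2$1 \<noteq> 0")
        case True
        then show ?thesis by (rule case3[OF nA nC nB nD a0 c0 _ E])
      next
        case False
        then have ra: "A2$1$0 * A2$2$1 = 0" by simp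
        show ?thesis
        proof (cases "A3$1$0 * A3$2$1 \<noteq> 0")
          case True
          then show ?thesis by (rule case4[OF nA nC nB nD a0 c0 _ E])
        next
          case False
          then have rc: "A3$1$0 * A3$2$1 = 0" by simp
          show ?thesis
          proof (cases "w \<in> S33")
            case True
            then show ?thesis using E by blast
          next
            case False
            then have w': "w \<in> P33'" using w unfolding P33_def by blast
            have e1: "trword (triple JJ A2 A3) [1,1,2] = trword (triple JJ B2 B3) [1,1,2]" using E m_w112 by blast
            have b0: "B2$2$0 = 0" using e1 a0 unfolding tw112_gen by simp
            have e2: "trword (triple JJ A2 A3) [1,1,3] = trword (triple JJ B2 B3) [1,1,3]" using E m_w113 by blast
            have d0: "B3$2$0 = 0" using e2 c0 unfolding tw113_gen by simp
            have e3: "trword (triple JJ A2 A3) [1,1,2,2] = trword (triple JJ B2 B3) [1,1,2,2]" using E m_w1122 by blast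
            have rb: "B2$1$0 * B2$2$1 = 0" using e3 ra unfolding tw1122_gen[OF a0] tw1122_gen[OF b0] by simp
            have e4: "trword (triple JJ A2 A3) [1,1,3,3] = trword (triple JJ B2 B3) [1,1,3,3]" using E m_w1133 by blast
            have rd: "B3$1$0 * B3$2$1 = 0" using e4 rc unfolding tw1133_gen[OF c0] tw1133_gen[OF d0] by simp
            have "trword (triple JJ A2 A3) w = 0" by (rule case5M[OF nA nC a0 c0 ra rc w'])
            moreover have "trword (triple JJ B2 B3) w = 0" by (rule case5M[OF nB nD b0 d0 rb rd w'])
            ultimately show ?thesis by simp
          qed
        qed
      qed
    qed
  qed
  show ?thesis unfolding J using main by blast
qed

end
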